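(* (i) Let $h_1,h_2,h_3$ be smooth functions of $(u,u_x)$ and let $m=u-u_{xx}$. The function $$k=h_1(u,u_x)m+h_2(u,u_x)m^2+h_3(u,u_x)m^3$$ satisfies $\hat E_u(k)=0$ if and only if $$h_1=u_xk_1(u^2-u_x^2)+k_0\frac{u}{u^2-u_x^2},\qquad h_2=h_3=0,$$ where $k_1$ is an arbitrary function of one variable and $k_0$ is an arbitrary constant. (ii) Any function $k$ of this form is a total $x$-derivative: $$k=D_x\Big(\tfrac12K_1(u^2-u_x^2)+\tfrac12k_0\ln\Big(\frac{u-u_x}{u+u_x}\Big)+k_0x\Big),$$ where $K_1$ is a function with $K_1'=k_1$.
   Context: $D_x$ is the total $x$-derivative acting on functions of $x$, $u$ and $x$-derivatives of $u$. The Euler operator with respect to $u$ is $\hat E_u=\partial_u-D_x\partial_{u_x}+D_x^2\partial_{u_{xx}}-D_x^3\partial_{u_{xxx}}+\cdots$. Expressions are considered on open sets where they are defined (e.g. $u^2\neq u_x^2$). *)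

theory Defs
  imports "HOL-Analysis.Analysis"
begin

text \<open>Jet space: a point is (x, U) with U i = the i-th x-derivative u_i of u
  (U 0 = u, U 1 = u_x, U 2 = u_xx, ...).\<close>

type_synonym dfun = "real \<Rightarrow> (nat \<Rightarrow> real) \<Rightarrow> real"

definition pdu :: "nat \<Rightarrow> dfun \<Rightarrow> dfun" where
  "pdu i F x U = deriv (\<lambda>t. F x (U(i := t))) (U i)"

text \<open>Total x-derivative of a differential function of order at most n:
  D_x F = F_x + sum_{i \<le> n} u_{i+1} F_{u_i}.\<close>
definition tdx :: "nat \<Rightarrow> dfun \<Rightarrow> dfun" where
  "tdx n F x U = deriv (\<lambda>t. F t U) x + (\<Sum>i\<le>n. U (Suc i) * pdu i F x U)"

text \<open>Euler operator applied to a differential function of order at most n: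
  E_u F = sum_{j \<le> n} (-1)^j D_x^j (F_{u_j})  (the terms with j > n vanish).
  All intermediate functions have order at most 2n, so tdx (2*n) is exact.\<close>
definition euler :: "nat \<Rightarrow> dfun \<Rightarrow> dfun" where
  "euler n F x U = (\<Sum>j\<le>n. (-1) ^ j * ((tdx (2 * n)) ^^ j) (pdu j F) x U)"

definition pd1 :: "(real \<times> real \<Rightarrow> real) \<Rightarrow> real \<times> real \<Rightarrow> real" where
  "pd1 f p = deriv (\<lambda>t. f (t, snd p)) (fst p)"

definition pd2 :: "(real \<times> real \<Rightarrow> real) \<Rightarrow> real \<times> real \<Rightarrow> real" where
  "pd2 f p = deriv (\<lambda>t. f (fst p, t)) (snd p)"

fun Ck2 :: "nat \<Rightarrow> (real \<times> real) set \<Rightarrow> (real \<times> real \<Rightarrow> real) \<Rightarrow> bool" where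
  "Ck2 0 S f = continuous_on S f"
| "Ck2 (Suc n) S f = ((\<forall>p\<in>S. f differentiable (at p)) \<and> Ck2 n S (pd1 f) \<and> Ck2 n S (pd2 f))"

definition smooth2_on :: "(real \<times> real) set \<Rightarrow> (real \<times> real \<Rightarrow> real) \<Rightarrow> bool" where
  "smooth2_on S f = (\<forall>n. Ck2 n S f)"

definition smooth1_on :: "real set \<Rightarrow> (real \<Rightarrow> real) \<Rightarrow> bool" where
  "smooth1_on S f = (\<forall>n. \<forall>s\<in>S. ((deriv ^^ n) f) differentiable (at s))"

definition kfun :: "(real \<times> real \<Rightarrow> real) \<Rightarrow> (real \<times> real \<Rightarrow> real) \<Rightarrow> (real \<times> real \<Rightarrow> real) \<Rightarrow> dfun" where
  "kfun h1 h2 h3 x U =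
     h1 (U 0, U 1) * (U 0 - U 2) + h2 (U 0, U 1) * (U 0 - U 2) ^ 2 + h3 (U 0, U 1) * (U 0 - U 2) ^ 3"

end

theory Submission
  imports Defs
begin



lemma pd_frechet:
  fixes G :: "real \<times> real \<Rightarrow> real"
  assumes "G differentiable (at (a,b))"
  shows "(G has_derivative (\<lambda>v. pd1 G (a,b) * fst v + pd2 G (a,b) * snd v)) (at (a,b))"
    and "((\<lambda>t. G (t,b)) has_real_derivative pd1 G (a,b)) (at a)"
    and "((\<lambda>t. G (a,t)) has_real_derivative pd2 G (a,b)) (at b)"
proof -
  obtain D where D: "(G has_derivative D) (at (a,b))" using assms unfolding differentiable_def by blast
  have lin: "linear D" using D has_derivative_linear by blast
  have h1: "((\<lambda>t. (t,b)) has_derivative (\<lambda>h. (h,0))) (at a)"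
    by (auto intro!: derivative_eq_intros)
  have h2: "((\<lambda>t. (a,t)) has_derivative (\<lambda>h. (0,h))) (at b)"
    by (auto intro!: derivative_eq_intros)
  have c1: "((\<lambda>t. G (t,b)) has_derivative (\<lambda>h. D (h,0))) (at a)"
    using diff_chain_at[OF h1, of G D] D by (simp add: o_def)
  have c2: "((\<lambda>t. G (a,t)) has_derivative (\<lambda>h. D (0,h))) (at b)"
    using diff_chain_at[OF h2, of G D] D by (simp add: o_def)
  have e1: "D (h,0) = h * D (1,0)" for h
    using linear_scale[OF lin, of h "(1,0)"] by (simp add: mult.commute)
  have e2: "D (0,h) = h * D (0,1)" for h
    using linear_scale[OF lin, of h "(0,1)"] by (simp add: mult.commute)
  have d1: "((\<lambda>t. G (t,b)) has_real_derivative D (1,0)) (at a)"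
  proof -
    have "(\<lambda>h. D (h,0)) = (*) (D (1,0))" by (rule ext) (metis e1 mult.commute)
    thus ?thesis using c1 unfolding has_field_derivative_def by simp
  qed
  have d2: "((\<lambda>t. G (a,t)) has_real_derivative D (0,1)) (at b)"
  proof -
    have "(\<lambda>h. D (0,h)) = (*) (D (0,1))" by (rule ext) (metis e2 mult.commute)
    thus ?thesis using c2 unfolding has_field_derivative_def by simp
  qed
  have p1: "pd1 G (a,b) = D (1,0)" unfolding pd1_def using DERIV_imp_deriv[OF d1] by simp
  have p2: "pd2 G (a,b) = D (0,1)" unfolding pd2_def using DERIV_imp_deriv[OF d2] by simp
  have "D v = pd1 G (a,b) * fst v + pd2 G (a,b) * snd v" for v
  proof -
    have "D v = D (fst v, 0) + D (0, snd v)"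
      using linear_add[OF lin, of "(fst v,0)" "(0, snd v)"] by simp
    thus ?thesis using e1[of "fst v"] e2[of "snd v"] p1 p2 by (simp add: mult.commute)
  qed
  then have "D = (\<lambda>v. pd1 G (a,b) * fst v + pd2 G (a,b) * snd v)" by auto
  then show "(G has_derivative (\<lambda>v. pd1 G (a,b) * fst v + pd2 G (a,b) * snd v)) (at (a,b))"
    using D by simp
  show "((\<lambda>t. G (t,b)) has_real_derivative pd1 G (a,b)) (at a)" using d1 p1 by simp
  show "((\<lambda>t. G (a,t)) has_real_derivative pd2 G (a,b)) (at b)" using d2 p2 by simp
qed



definition dep :: "nat \<Rightarrow> dfun \<Rightarrow> bool" where
  "dep k F = (\<forall>x W W'. (\<forall>i<k. W i = W' i) \<longrightarrow> F x W = F x W')"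
definition xind :: "dfun \<Rightarrow> bool" where
  "xind F = (\<forall>x x' W. F x W = F x' W)"
definition eqO :: "(real \<times> real) set \<Rightarrow> dfun \<Rightarrow> dfun \<Rightarrow> bool" where
  "eqO S F G = (\<forall>x W. (W 0, W 1) \<in> S \<longrightarrow> F x W = G x W)"

lemma deriv_constf: "deriv (\<lambda>t. c) a = (0::real)"
  by (rule DERIV_imp_deriv) (rule DERIV_const)

lemma pdu_eq: "((\<lambda>t. F x (W(i:=t))) has_real_derivative d) (at (W i)) \<Longrightarrow> pdu i F x W = d"
  unfolding pdu_def by (rule DERIV_imp_deriv)

lemma xind_pdu: assumes "xind F" shows "xind (pdu i F)"
  unfolding xind_def
proof (intro allI)
  fix x x' W
  have "(\<lambda>t. F x (W(i:=t))) = (\<lambda>t. F x' (W(i:=t)))"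
    using assms unfolding xind_def by (intro ext) blast
  then show "pdu i F x W = pdu i F x' W" unfolding pdu_def by simp
qed

lemma dep_const_pdu:
  assumes "dep k F" "k \<le> i" shows "pdu i F x W = 0"
proof -
  have "(\<lambda>t. F x (W(i:=t))) = (\<lambda>t. F x W)"
  proof (rule ext)
    fix t
    have "\<forall>j<k. (W(i:=t)) j = W j" using assms(2) by auto
    then show "F x (W(i:=t)) = F x W" using assms(1) unfolding dep_def by blast
  qed
  then show ?thesis unfolding pdu_def by (simp add: deriv_constf)
qed

lemma dep_pdu:
  assumes "dep k F" shows "dep k (pdu i F)"
  unfolding dep_def
proof (intro allI impI)
  fix x W W' assume a: "\<forall>i<k. W i = (W' i :: real)"
  show "pdu i F x W = pdu i F x W'"
  proof (cases "i < k")
    case True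
    have "(\<lambda>t. F x (W(i:=t))) = (\<lambda>t. F x (W'(i:=t)))"
      using assms a unfolding dep_def by (intro ext) auto
    then show ?thesis unfolding pdu_def using a True by simp
  next
    case False
    then show ?thesis using dep_const_pdu[OF assms] by simp
  qed
qed

lemma tdx_xind:
  assumes "xind F" shows "tdx n F x W = (\<Sum>i\<le>n. W (Suc i) * pdu i F x W)"
proof -
  have "(\<lambda>t. F t W) = (\<lambda>t. F x W)" using assms unfolding xind_def by auto
  then show ?thesis unfolding tdx_def by (simp add: deriv_constf)
qed

lemma xind_tdx: assumes "xind F" shows "xind (tdx n F)"
  unfolding xind_def
proof (intro allI)
  fix x x' W
  have "pdu i F x W = pdu i F x' W" for i using xind_pdu[OF assms, of i] unfolding xind_def by blast
  then show "tdx n F x W = tdx n F x' W" by (simp add: tdx_xind[OF assms])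
qed

lemma dep_tdx:
  assumes "xind F" "dep k F" shows "dep (Suc k) (tdx n F)"
  unfolding dep_def
proof (intro allI impI)
  fix x W W' assume a: "\<forall>i<Suc k. W i = (W' i :: real)"
  have "W (Suc i) * pdu i F x W = W' (Suc i) * pdu i F x W'" for i
  proof (cases "i < k")
    case True
    then show ?thesis using a dep_pdu[OF assms(2), of i] unfolding dep_def by auto
  next
    case False
    then show ?thesis using dep_const_pdu[OF assms(2)] by simp
  qed
  then show "tdx n F x W = tdx n F x W'" using tdx_xind[OF assms(1)] by simp
qed

lemma ev_fst:
  fixes S :: "(real \<times> real) set"
  assumes "open S" "(a,b) \<in> S" shows "eventually (\<lambda>t. (t,b) \<in> S) (nhds a)"
proof -
  obtain e where e: "e > 0" "ball (a,b) e \<subseteq> S" using assms openE by blast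
  show ?thesis unfolding eventually_nhds_metric
    using e by (intro exI[of _ e]) (auto simp: dist_Pair_Pair dist_commute)
qed

lemma ev_snd:
  fixes S :: "(real \<times> real) set"
  assumes "open S" "(a,b) \<in> S" shows "eventually (\<lambda>t. (a,t) \<in> S) (nhds b)"
proof -
  obtain e where e: "e > 0" "ball (a,b) e \<subseteq> S" using assms openE by blast
  show ?thesis unfolding eventually_nhds_metric
    using e by (intro exI[of _ e]) (auto simp: dist_Pair_Pair dist_commute)
qed

lemma eqO_pdu:
  assumes "open S" "eqO S F G" shows "eqO S (pdu i F) (pdu i G)"
  unfolding eqO_def
proof (intro allI impI)
  fix x and W :: "nat \<Rightarrow> real" assume W: "(W 0, W 1) \<in> S"
  have ev: "eventually (\<lambda>t. (W(i:=t)) 0 = W 0 \<and> (W(i:=t)) 1 = W 1 \<or> ((W(i:=t)) 0, (W(i:=t)) 1) \<in> S) (nhds (W i))"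
  proof (cases "i = 0")
    case True
    then show ?thesis using ev_fst[OF assms(1) W] by (auto elim!: eventually_mono)
  next
    case False
    then show ?thesis
    proof (cases "i = 1")
      case True
      then show ?thesis using ev_snd[OF assms(1) W] by (auto elim!: eventually_mono)
    next
      case False
      then show ?thesis using \<open>i \<noteq> 0\<close> by auto
    qed
  qed
  have "eventually (\<lambda>t. F x (W(i:=t)) = G x (W(i:=t))) (nhds (W i))"
    using ev assms(2) W unfolding eqO_def by (auto elim!: eventually_mono)
  then show "pdu i F x W = pdu i G x W" unfolding pdu_def by (rule deriv_cong_ev) simp
qed

lemma eqO_tdx:
  assumes "open S" "eqO S F G" shows "eqO S (tdx n F) (tdx n G)"
proof -
  have h: "eqO S (pdu i F) (pdu i G)" for i using eqO_pdu[OF assms] .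
  show ?thesis unfolding eqO_def
  proof (intro allI impI)
    fix x :: real and W :: "nat \<Rightarrow> real" assume W: "(W 0, W 1) \<in> S"
    have "(\<lambda>t. F t W) = (\<lambda>t. G t W)" using assms(2) W unfolding eqO_def by auto
    moreover have "pdu i F x W = pdu i G x W" for i using h[of i] W unfolding eqO_def by blast
    ultimately show "tdx n F x W = tdx n G x W" unfolding tdx_def by simp
  qed
qed

lemma eqO_trans: "eqO S F G \<Longrightarrow> eqO S G H \<Longrightarrow> eqO S F H"
  unfolding eqO_def by metis

lemma eqO_sym: "eqO S F G \<Longrightarrow> eqO S G F"
  unfolding eqO_def by metis

lemma gen:
  assumes S: "open S" and eq: "eqO S F (\<lambda>x W. A (W 0) (W 1) * W 2 + B (W 0) (W 1))"
    and dA1: "\<And>a b. (a,b) \<in> S \<Longrightarrow> ((\<lambda>t. A t b) has_real_derivative Au a b) (at a)"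
    and dA2: "\<And>a b. (a,b) \<in> S \<Longrightarrow> ((\<lambda>t. A a t) has_real_derivative Ap a b) (at b)"
    and dB1: "\<And>a b. (a,b) \<in> S \<Longrightarrow> ((\<lambda>t. B t b) has_real_derivative Bu a b) (at a)"
    and dB2: "\<And>a b. (a,b) \<in> S \<Longrightarrow> ((\<lambda>t. B a t) has_real_derivative Bp a b) (at b)"
  shows "eqO S (pdu 0 F) (\<lambda>x W. Au (W 0) (W 1) * W 2 + Bu (W 0) (W 1))"
    and "eqO S (pdu 1 F) (\<lambda>x W. Ap (W 0) (W 1) * W 2 + Bp (W 0) (W 1))"
    and "eqO S (pdu 2 F) (\<lambda>x W. A (W 0) (W 1))"
    and "eqO S (tdx 4 F) (\<lambda>x W. W 1 * (Au (W 0) (W 1) * W 2 + Bu (W 0) (W 1))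
            + W 2 * (Ap (W 0) (W 1) * W 2 + Bp (W 0) (W 1)) + W 3 * A (W 0) (W 1))"
proof -
  define G where "G = (\<lambda>(x::real) (W::nat\<Rightarrow>real). A (W 0) (W 1) * W 2 + B (W 0) (W 1))"
  have eG: "eqO S (pdu i F) (pdu i G)" for i using eqO_pdu[OF S eq[folded G_def]] .
  have p0: "eqO S (pdu 0 G) (\<lambda>x W. Au (W 0) (W 1) * W 2 + Bu (W 0) (W 1))"
    unfolding eqO_def
  proof (intro allI impI)
    fix x and W :: "nat \<Rightarrow> real" assume W: "(W 0, W 1) \<in> S"
    show "pdu 0 G x W = Au (W 0) (W 1) * W 2 + Bu (W 0) (W 1)"
    proof (rule pdu_eq)
      have e: "(\<lambda>t. G x (W(0:=t))) = (\<lambda>t. A t (W 1) * W 2 + B t (W 1))"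
        by (simp add: G_def)
      have "((\<lambda>t. A t (W 1) * W 2 + B t (W 1)) has_real_derivative Au (W 0) (W 1) * W 2 + Bu (W 0) (W 1)) (at (W 0))"
        by (rule DERIV_add[OF DERIV_cmult_right[OF dA1[OF W]] dB1[OF W]])
      then show "((\<lambda>t. G x (W(0:=t))) has_real_derivative Au (W 0) (W 1) * W 2 + Bu (W 0) (W 1)) (at (W 0))"
        by (simp only: e)
    qed
  qed
  have p1: "eqO S (pdu 1 G) (\<lambda>x W. Ap (W 0) (W 1) * W 2 + Bp (W 0) (W 1))"
    unfolding eqO_def
  proof (intro allI impI)
    fix x and W :: "nat \<Rightarrow> real" assume W: "(W 0, W 1) \<in> S"
    show "pdu 1 G x W = Ap (W 0) (W 1) * W 2 + Bp (W 0) (W 1)"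
    proof (rule pdu_eq)
      have e: "(\<lambda>t. G x (W(1:=t))) = (\<lambda>t. A (W 0) t * W 2 + B (W 0) t)"
        by (simp add: G_def)
      have "((\<lambda>t. A (W 0) t * W 2 + B (W 0) t) has_real_derivative Ap (W 0) (W 1) * W 2 + Bp (W 0) (W 1)) (at (W 1))"
        by (rule DERIV_add[OF DERIV_cmult_right[OF dA2[OF W]] dB2[OF W]])
      then show "((\<lambda>t. G x (W(1:=t))) has_real_derivative Ap (W 0) (W 1) * W 2 + Bp (W 0) (W 1)) (at (W 1))"
        by (simp only: e)
    qed
  qed
  have p2: "eqO S (pdu 2 G) (\<lambda>x W. A (W 0) (W 1))"
    unfolding eqO_def
  proof (intro allI impI)
    fix x and W :: "nat \<Rightarrow> real" assume W: "(W 0, W 1) \<in> S"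
    show "pdu 2 G x W = A (W 0) (W 1)"
    proof (rule pdu_eq)
      have e: "(\<lambda>t. G x (W(2:=t))) = (\<lambda>t. A (W 0) (W 1) * t + B (W 0) (W 1))"
        by (simp add: G_def)
      have "((\<lambda>t. A (W 0) (W 1) * t + B (W 0) (W 1)) has_real_derivative A (W 0) (W 1)) (at (W 2))"
        by (intro derivative_eq_intros) auto
      then show "((\<lambda>t. G x (W(2:=t))) has_real_derivative A (W 0) (W 1)) (at (W 2))"
        by (simp only: e)
    qed
  qed
  have dG: "dep 3 G" unfolding dep_def G_def by auto
  have p3: "pdu i G x W = 0" if "3 \<le> i" for i x W using dep_const_pdu[OF dG that] .
  show "eqO S (pdu 0 F) (\<lambda>x W. Au (W 0) (W 1) * W 2 + Bu (W 0) (W 1))"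
    using eqO_trans[OF eG p0] .
  show "eqO S (pdu 1 F) (\<lambda>x W. Ap (W 0) (W 1) * W 2 + Bp (W 0) (W 1))"
    using eqO_trans[OF eG p1] .
  show "eqO S (pdu 2 F) (\<lambda>x W. A (W 0) (W 1))"
    using eqO_trans[OF eG p2] .
  have xG: "xind G" unfolding xind_def G_def by auto
  have "eqO S (tdx 4 F) (tdx 4 G)" using eqO_tdx[OF S eq[folded G_def]] .
  moreover have "eqO S (tdx 4 G) (\<lambda>x W. W 1 * (Au (W 0) (W 1) * W 2 + Bu (W 0) (W 1))
            + W 2 * (Ap (W 0) (W 1) * W 2 + Bp (W 0) (W 1)) + W 3 * A (W 0) (W 1))"
    unfolding eqO_def
  proof (intro allI impI)
    fix x and W :: "nat \<Rightarrow> real" assume W: "(W 0, W 1) \<in> S"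
    have "tdx 4 G x W = (\<Sum>i\<le>4. W (Suc i) * pdu i G x W)" using tdx_xind[OF xG] .
    also have "\<dots> = W 1 * pdu 0 G x W + W 2 * pdu 1 G x W + W 3 * pdu 2 G x W"
      by (simp add: numeral_eq_Suc p3 One_nat_def)
    finally show "tdx 4 G x W = W 1 * (Au (W 0) (W 1) * W 2 + Bu (W 0) (W 1))
            + W 2 * (Ap (W 0) (W 1) * W 2 + Bp (W 0) (W 1)) + W 3 * A (W 0) (W 1)"
      using p0 p1 p2 W unfolding eqO_def by simp
  qed
  ultimately show "eqO S (tdx 4 F) (\<lambda>x W. W 1 * (Au (W 0) (W 1) * W 2 + Bu (W 0) (W 1))
            + W 2 * (Ap (W 0) (W 1) * W 2 + Bp (W 0) (W 1)) + W 3 * A (W 0) (W 1))"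
    by (rule eqO_trans)
qed


lemma smooth2_pd1: "smooth2_on S G \<Longrightarrow> smooth2_on S (pd1 G)"
  unfolding smooth2_on_def by (metis Ck2.simps(2))
lemma smooth2_pd2: "smooth2_on S G \<Longrightarrow> smooth2_on S (pd2 G)"
  unfolding smooth2_on_def by (metis Ck2.simps(2))
lemma smooth2_diff: "smooth2_on S G \<Longrightarrow> w \<in> S \<Longrightarrow> G differentiable (at w)"
  unfolding smooth2_on_def by (metis Ck2.simps(2))

lemma dep_mono: "dep k F \<Longrightarrow> k \<le> k' \<Longrightarrow> dep k' F"
  unfolding dep_def by auto

lemma dep_eq: "dep k F \<Longrightarrow> (\<forall>j<k. V j = V' j) \<Longrightarrow> F x V = F x V'"
  unfolding dep_def by blast

lemma kfun_pdu2:
  "pdu 2 (kfun h1 h2 h3) x W = - (h1 (W 0, W 1) + 2 * h2 (W 0, W 1) * (W 0 - W 2)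
       + 3 * h3 (W 0, W 1) * (W 0 - W 2)^2)"
proof (rule pdu_eq)
  have e: "(\<lambda>t. kfun h1 h2 h3 x (W(2:=t))) = (\<lambda>t. h1 (W 0, W 1) * (W 0 - t) + h2 (W 0, W 1) * (W 0 - t) ^ 2 + h3 (W 0, W 1) * (W 0 - t) ^ 3)"
    by (simp add: kfun_def)
  have "((\<lambda>t. h1 (W 0, W 1) * (W 0 - t) + h2 (W 0, W 1) * (W 0 - t) ^ 2 + h3 (W 0, W 1) * (W 0 - t) ^ 3)
     has_real_derivative - (h1 (W 0, W 1) + 2 * h2 (W 0, W 1) * (W 0 - W 2)
       + 3 * h3 (W 0, W 1) * (W 0 - W 2)^2)) (at (W 2))"
    by (auto intro!: derivative_eq_intros simp: algebra_simps power2_eq_square)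
  then show "((\<lambda>t. kfun h1 h2 h3 x (W(2:=t))) has_real_derivative - (h1 (W 0, W 1) + 2 * h2 (W 0, W 1) * (W 0 - W 2)
       + 3 * h3 (W 0, W 1) * (W 0 - W 2)^2)) (at (W 2))" by (simp only: e)
qed

lemma kfun_pdu22:
  "pdu 2 (pdu 2 (kfun h1 h2 h3)) x W = 2 * h2 (W 0, W 1) + 6 * h3 (W 0, W 1) * (W 0 - W 2)"
proof (rule pdu_eq)
  have e: "(\<lambda>t. pdu 2 (kfun h1 h2 h3) x (W(2:=t))) = (\<lambda>t. - (h1 (W 0, W 1) + 2 * h2 (W 0, W 1) * (W 0 - t)
       + 3 * h3 (W 0, W 1) * (W 0 - t)^2))"
    by (simp add: kfun_pdu2)
  have "((\<lambda>t. - (h1 (W 0, W 1) + 2 * h2 (W 0, W 1) * (W 0 - t)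
       + 3 * h3 (W 0, W 1) * (W 0 - t)^2))
     has_real_derivative 2 * h2 (W 0, W 1) + 6 * h3 (W 0, W 1) * (W 0 - W 2)) (at (W 2))"
    by (auto intro!: derivative_eq_intros simp: algebra_simps power2_eq_square)
  then show "((\<lambda>t. pdu 2 (kfun h1 h2 h3) x (W(2:=t))) has_real_derivative 2 * h2 (W 0, W 1) + 6 * h3 (W 0, W 1) * (W 0 - W 2)) (at (W 2))"
    by (simp only: e)
qed

lemma euler2_expand:
  "euler 2 F x U = pdu 0 F x U - tdx 4 (pdu 1 F) x U + tdx 4 (tdx 4 (pdu 2 F)) x U"
  unfolding euler_def by (simp add: numeral_eq_Suc One_nat_def)

lemma euler_shift:
  assumes xF: "xind F" and dF: "dep 3 F"
  shows "euler 2 F x (U(4:=v)) = euler 2 F x (U(4:=0)) + v * pdu 2 (pdu 2 F) x U"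
proof -
  define G where "G = tdx 4 (pdu 2 F)"
  define Q where "Q = (\<lambda>i. pdu i (pdu 2 F))"
  have dQ: "dep 3 (Q i)" for i unfolding Q_def by (intro dep_pdu dF)
  have xQ: "xind (pdu 2 F)" by (intro xind_pdu xF)
  have dG: "dep 4 G" unfolding G_def using dep_tdx[OF xQ dep_pdu[OF dF]] by simp
  have xG: "xind G" unfolding G_def by (intro xind_tdx xQ)
  have Q3: "Q i x W = 0" if "3 \<le> i" for i x W unfolding Q_def by (rule dep_const_pdu[OF dep_pdu[OF dF] that])
  have Gf: "G x W = W 1 * Q 0 x W + W 2 * Q 1 x W + W 3 * Q 2 x W" for x W
  proof -
    have "G x W = (\<Sum>i\<le>4. W (Suc i) * pdu i (pdu 2 F) x W)" unfolding G_def by (rule tdx_xind[OF xQ])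
    also have "\<dots> = W 1 * Q 0 x W + W 2 * Q 1 x W + W 3 * Q 2 x W"
      using Q3 unfolding Q_def by (simp add: numeral_eq_Suc One_nat_def)
    finally show ?thesis .
  qed
  have G3: "pdu 3 G x V = Q 2 x V" for V
  proof (rule pdu_eq)
    have "\<forall>j<3. (V(3:=t)) j = V j" for t by auto
    then have "Q i x (V(3:=t)) = Q i x V" for i t using dep_eq[OF dQ] by blast
    then have e: "(\<lambda>t. G x (V(3:=t))) = (\<lambda>t. V 1 * Q 0 x V + V 2 * Q 1 x V + t * Q 2 x V)"
      by (simp add: Gf)
    have "((\<lambda>t. V 1 * Q 0 x V + V 2 * Q 1 x V + t * Q 2 x V) has_real_derivative Q 2 x V) (at (V 3))"
      by (auto intro!: derivative_eq_intros)
    then show "((\<lambda>t. G x (V(3:=t))) has_real_derivative Q 2 x V) (at (V 3))" by (simp only: e)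
  qed
  have G4: "pdu 4 G x V = 0" for V by (rule dep_const_pdu[OF dG]) simp
  have tG: "tdx 4 G x V = V 1 * pdu 0 G x V + V 2 * pdu 1 G x V + V 3 * pdu 2 G x V + V 4 * Q 2 x V" for V
    using tdx_xind[OF xG, of 4 x V] G3 G4 by (simp add: numeral_eq_Suc One_nat_def)
  define U0 where "U0 = U(4:=0)"
  have agree: "\<forall>j<4. (U(4:=v)) j = U0 j" unfolding U0_def by auto
  have agree3: "\<forall>j<3. (U(4:=v)) j = U j" "\<forall>j<3. U0 j = U j" unfolding U0_def by auto
  have dP0: "dep 4 (pdu 0 F)" using dep_mono[OF dep_pdu[OF dF]] by simp
  have dP1: "dep 4 (tdx 4 (pdu 1 F))" using dep_tdx[OF xind_pdu[OF xF] dep_pdu[OF dF]] by simp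
  have a1: "pdu 0 F x (U(4:=v)) = pdu 0 F x U0" by (rule dep_eq[OF dP0 agree])
  have a2: "tdx 4 (pdu 1 F) x (U(4:=v)) = tdx 4 (pdu 1 F) x U0" by (rule dep_eq[OF dP1 agree])
  have a3: "pdu i G x (U(4:=v)) = pdu i G x U0" for i by (rule dep_eq[OF dep_pdu[OF dG] agree])
  have a4: "Q 2 x (U(4:=v)) = Q 2 x U" "Q 2 x U0 = Q 2 x U"
    using dep_eq[OF dQ agree3(1)] dep_eq[OF dQ agree3(2)] by blast+
  have "euler 2 F x (U(4:=v)) = pdu 0 F x U0 - tdx 4 (pdu 1 F) x U0 + (U0 1 * pdu 0 G x U0 + U0 2 * pdu 1 G x U0 + U0 3 * pdu 2 G x U0) + v * Q 2 x U"
    unfolding euler2_expand G_def[symmetric] tG a1 a2 a3 a4 by (simp add: U0_def)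
  moreover have "euler 2 F x U0 = pdu 0 F x U0 - tdx 4 (pdu 1 F) x U0 + (U0 1 * pdu 0 G x U0 + U0 2 * pdu 1 G x U0 + U0 3 * pdu 2 G x U0)"
    unfolding euler2_expand G_def[symmetric] tG a4 by (simp add: U0_def)
  ultimately show ?thesis unfolding U0_def Q_def by simp
qed


lemma pdD1: "smooth2_on S G \<Longrightarrow> (a,b) \<in> S \<Longrightarrow> ((\<lambda>t. G (t,b)) has_real_derivative pd1 G (a,b)) (at a)"
  using pd_frechet(2) smooth2_diff by blast
lemma pdD2: "smooth2_on S G \<Longrightarrow> (a,b) \<in> S \<Longrightarrow> ((\<lambda>t. G (a,t)) has_real_derivative pd2 G (a,b)) (at b)"
  using pd_frechet(3) smooth2_diff by blast

definition EA :: "(real \<times> real \<Rightarrow> real) \<Rightarrow> real \<times> real \<Rightarrow> real" where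
  "EA h w = 2 * pd1 h w + fst w * pd2 (pd2 h) w + snd w * pd2 (pd1 h) w"
definition EB :: "(real \<times> real \<Rightarrow> real) \<Rightarrow> real \<times> real \<Rightarrow> real" where
  "EB h w = fst w * pd1 h w + h w - snd w * fst w * pd1 (pd2 h) w - snd w * pd2 h w
     - (snd w)^2 * pd1 (pd1 h) w"

lemma euler_formula:
  assumes S: "open S" and hs: "smooth2_on S h" and z: "\<forall>w\<in>S. h2 w = 0 \<and> h3 w = 0"
  shows "eqO S (euler 2 (kfun h h2 h3)) (\<lambda>x U. EB h (U 0, U 1) - U 2 * EA h (U 0, U 1))"
proof -
  have s1: "smooth2_on S (pd1 h)" and s2: "smooth2_on S (pd2 h)"
    using smooth2_pd1[OF hs] smooth2_pd2[OF hs] .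
  note D = pdD1[OF hs] pdD2[OF hs] pdD1[OF s1] pdD2[OF s1] pdD1[OF s2] pdD2[OF s2]
  define F0 where "F0 = kfun h h2 h3"
  have e0: "eqO S F0 (\<lambda>x W. (- h (W 0, W 1)) * W 2 + W 0 * h (W 0, W 1))"
    using z unfolding eqO_def F0_def kfun_def by (auto simp: algebra_simps)
  have g0a: "eqO S (pdu 0 F0) (\<lambda>x W. (- pd1 h (W 0, W 1)) * W 2 + (h (W 0, W 1) + W 0 * pd1 h (W 0, W 1)))"
    by (rule gen(1)[where A="\<lambda>a b. - h (a,b)" and B="\<lambda>a b. a * h (a,b)"
       and Au="\<lambda>a b. - pd1 h (a,b)" and Ap="\<lambda>a b. - pd2 h (a,b)"
       and Bu="\<lambda>a b. h (a,b) + a * pd1 h (a,b)" and Bp="\<lambda>a b. a * pd2 h (a,b)", OF S e0])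
       (auto intro!: derivative_eq_intros D)
  have g0b: "eqO S (pdu 1 F0) (\<lambda>x W. (- pd2 h (W 0, W 1)) * W 2 + W 0 * pd2 h (W 0, W 1))"
    by (rule gen(2)[where A="\<lambda>a b. - h (a,b)" and B="\<lambda>a b. a * h (a,b)"
       and Au="\<lambda>a b. - pd1 h (a,b)" and Ap="\<lambda>a b. - pd2 h (a,b)"
       and Bu="\<lambda>a b. h (a,b) + a * pd1 h (a,b)" and Bp="\<lambda>a b. a * pd2 h (a,b)", OF S e0])
       (auto intro!: derivative_eq_intros D)
  have g0c: "eqO S (pdu 2 F0) (\<lambda>x W. 0 * W 2 + (- h (W 0, W 1)))"
  proof -
    have "eqO S (pdu 2 F0) (\<lambda>x W. (- h (W 0, W 1)))"
    by (rule gen(3)[where A="\<lambda>a b. - h (a,b)" and B="\<lambda>a b. a * h (a,b)"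
       and Au="\<lambda>a b. - pd1 h (a,b)" and Ap="\<lambda>a b. - pd2 h (a,b)"
       and Bu="\<lambda>a b. h (a,b) + a * pd1 h (a,b)" and Bp="\<lambda>a b. a * pd2 h (a,b)", OF S e0])
       (auto intro!: derivative_eq_intros D)
    then show ?thesis unfolding eqO_def by simp
  qed
  have g1: "eqO S (tdx 4 (pdu 1 F0)) (\<lambda>x W. W 1 * (- pd1 (pd2 h) (W 0, W 1) * W 2 + (pd2 h (W 0, W 1) + W 0 * pd1 (pd2 h) (W 0, W 1)))
            + W 2 * (- pd2 (pd2 h) (W 0, W 1) * W 2 + W 0 * pd2 (pd2 h) (W 0, W 1)) + W 3 * (- pd2 h (W 0, W 1)))"
    by (rule gen(4)[where A="\<lambda>a b. - pd2 h (a,b)" and B="\<lambda>a b. a * pd2 h (a,b)"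
       and Au="\<lambda>a b. - pd1 (pd2 h) (a,b)" and Ap="\<lambda>a b. - pd2 (pd2 h) (a,b)"
       and Bu="\<lambda>a b. pd2 h (a,b) + a * pd1 (pd2 h) (a,b)" and Bp="\<lambda>a b. a * pd2 (pd2 h) (a,b)", OF S g0b])
       (auto intro!: derivative_eq_intros D)
  have g2: "eqO S (tdx 4 (pdu 2 F0)) (\<lambda>x W. (- pd2 h (W 0, W 1)) * W 2 + (- (W 1 * pd1 h (W 0, W 1))))"
  proof -
    have "eqO S (tdx 4 (pdu 2 F0)) (\<lambda>x W. W 1 * (0 * W 2 + - pd1 h (W 0, W 1)) + W 2 * (0 * W 2 + - pd2 h (W 0, W 1)) + W 3 * 0)"
      by (rule gen(4)[where A="\<lambda>a b. 0" and B="\<lambda>a b. - h (a,b)"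
       and Au="\<lambda>a b. 0" and Ap="\<lambda>a b. 0"
       and Bu="\<lambda>a b. - pd1 h (a,b)" and Bp="\<lambda>a b. - pd2 h (a,b)", OF S g0c])
       (auto intro!: derivative_eq_intros D)
    then show ?thesis unfolding eqO_def by (auto simp: algebra_simps)
  qed
  have g3: "eqO S (tdx 4 (tdx 4 (pdu 2 F0))) (\<lambda>x W. W 1 * (- pd1 (pd2 h) (W 0, W 1) * W 2 + - (W 1 * pd1 (pd1 h) (W 0, W 1)))
            + W 2 * (- pd2 (pd2 h) (W 0, W 1) * W 2 + - (pd1 h (W 0, W 1) + W 1 * pd2 (pd1 h) (W 0, W 1))) + W 3 * (- pd2 h (W 0, W 1)))"
    by (rule gen(4)[where A="\<lambda>a b. - pd2 h (a,b)" and B="\<lambda>a b. - (b * pd1 h (a,b))"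
       and Au="\<lambda>a b. - pd1 (pd2 h) (a,b)" and Ap="\<lambda>a b. - pd2 (pd2 h) (a,b)"
       and Bu="\<lambda>a b. - (b * pd1 (pd1 h) (a,b))" and Bp="\<lambda>a b. - (pd1 h (a,b) + b * pd2 (pd1 h) (a,b))", OF S g2])
       (auto intro!: derivative_eq_intros D)
  show ?thesis unfolding eqO_def F0_def[symmetric]
  proof (intro allI impI)
    fix x :: real and U :: "nat \<Rightarrow> real" assume U: "(U 0, U 1) \<in> S"
    have "euler 2 F0 x U = pdu 0 F0 x U - tdx 4 (pdu 1 F0) x U + tdx 4 (tdx 4 (pdu 2 F0)) x U"
      by (rule euler2_expand)
    also have "\<dots> = EB h (U 0, U 1) - U 2 * EA h (U 0, U 1)"
    proof -
      have q0: "pdu 0 F0 x U = (- pd1 h (U 0, U 1)) * U 2 + (h (U 0, U 1) + U 0 * pd1 h (U 0, U 1))"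
        using g0a U unfolding eqO_def by blast
      have q1: "tdx 4 (pdu 1 F0) x U = U 1 * (- pd1 (pd2 h) (U 0, U 1) * U 2 + (pd2 h (U 0, U 1) + U 0 * pd1 (pd2 h) (U 0, U 1)))
            + U 2 * (- pd2 (pd2 h) (U 0, U 1) * U 2 + U 0 * pd2 (pd2 h) (U 0, U 1)) + U 3 * (- pd2 h (U 0, U 1))"
        using g1 U unfolding eqO_def by blast
      have q3: "tdx 4 (tdx 4 (pdu 2 F0)) x U = U 1 * (- pd1 (pd2 h) (U 0, U 1) * U 2 + - (U 1 * pd1 (pd1 h) (U 0, U 1)))
            + U 2 * (- pd2 (pd2 h) (U 0, U 1) * U 2 + - (pd1 h (U 0, U 1) + U 1 * pd2 (pd1 h) (U 0, U 1))) + U 3 * (- pd2 h (U 0, U 1))"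
        using g3 U unfolding eqO_def by blast
      show ?thesis unfolding q0 q1 q3 EA_def EB_def by (simp add: algebra_simps power2_eq_square)
    qed
    finally show "euler 2 F0 x U = EB h (U 0, U 1) - U 2 * EA h (U 0, U 1)" .
  qed
qed


definition Dn :: "nat \<Rightarrow> real set \<Rightarrow> (real \<Rightarrow> real) \<Rightarrow> bool" where
  "Dn n T f = (\<forall>k\<le>n. \<forall>s\<in>T. (deriv ^^ k) f differentiable (at s))"

lemma dd: fixes f :: "real \<Rightarrow> real" shows "f differentiable (at s) \<Longrightarrow> (f has_real_derivative deriv f s) (at s)"
  using DERIV_deriv_iff_real_differentiable by blast

lemma hd_cong:
  assumes "open T" "\<forall>x\<in>T. f x = g x" "s \<in> T"
  shows "(deriv ^^ k) f s = (deriv ^^ k) g s"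
proof (rule higher_deriv_cong_ev)
  show "eventually (\<lambda>x. f x = g x) (nhds s)"
    unfolding eventually_nhds using assms by blast
qed simp

lemma diff_cong:
  fixes f g :: "real \<Rightarrow> real"
  assumes "open T" "s \<in> T" "\<forall>x\<in>T. f x = g x" "f differentiable (at s)"
  shows "g differentiable (at s)"
proof -
  have "(g has_real_derivative deriv f s) (at s)"
    by (rule has_field_derivative_transform_within_open[OF dd[OF assms(4)] assms(1,2)]) (use assms(3) in auto)
  then show ?thesis using real_differentiable_def by blast
qed

lemma Dn_cong:
  assumes "open T" "Dn n T f" "\<forall>x\<in>T. f x = g x"
  shows "Dn n T g"
  unfolding Dn_def
proof (intro allI impI ballI)
  fix k s assume k: "k \<le> n" and s: "s \<in> T"
  have "\<forall>x\<in>T. (deriv ^^ k) f x = (deriv ^^ k) g x" using hd_cong[OF assms(1,3)] by blast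
  then show "(deriv ^^ k) g differentiable (at s)"
    using diff_cong[OF assms(1) s] assms(2) k s unfolding Dn_def by blast
qed

lemma funpow_deriv_Suc: "(deriv ^^ Suc k) f = (deriv ^^ k) (deriv f)"
  by (simp add: funpow_Suc_right del: funpow.simps)

lemma Dn_Suc:
  "Dn (Suc n) T f \<longleftrightarrow> (\<forall>s\<in>T. f differentiable (at s)) \<and> Dn n T (deriv f)"
proof
  assume a: "Dn (Suc n) T f"
  show "(\<forall>s\<in>T. f differentiable (at s)) \<and> Dn n T (deriv f)"
  proof
    show "\<forall>s\<in>T. f differentiable (at s)" using a unfolding Dn_def by (metis funpow_0 le0)
    show "Dn n T (deriv f)" unfolding Dn_def
    proof (intro allI impI ballI)
      fix k s assume "k \<le> n" "s \<in> T"
      then have "(deriv ^^ Suc k) f differentiable (at s)" using a unfolding Dn_def by auto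
      then show "(deriv ^^ k) (deriv f) differentiable (at s)" by (simp only: funpow_deriv_Suc)
    qed
  qed
next
  assume a: "(\<forall>s\<in>T. f differentiable (at s)) \<and> Dn n T (deriv f)"
  show "Dn (Suc n) T f" unfolding Dn_def
  proof (intro allI impI ballI)
    fix k s assume k: "k \<le> Suc n" and s: "s \<in> T"
    show "(deriv ^^ k) f differentiable (at s)"
    proof (cases k)
      case 0 then show ?thesis using a s by simp
    next
      case (Suc j)
      then have "(deriv ^^ j) (deriv f) differentiable (at s)" using a k s unfolding Dn_def by auto
      then show ?thesis using Suc by (simp only: funpow_deriv_Suc)
    qed
  qed
qed

lemma Dn_mono: "Dn n T f \<Longrightarrow> m \<le> n \<Longrightarrow> Dn m T f"
  unfolding Dn_def by auto

lemma Dn_diff: "Dn n T f \<Longrightarrow> s \<in> T \<Longrightarrow> f differentiable (at s)"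
  unfolding Dn_def by (metis funpow_0 le0)

lemma Dn_const: "Dn n T (\<lambda>x. c)"
proof (induction n arbitrary: c)
  case 0 then show ?case unfolding Dn_def by simp
next
  case (Suc n)
  have "deriv (\<lambda>x. c) = (\<lambda>x. 0)" by (rule ext) (rule DERIV_imp_deriv, rule DERIV_const)
  then show ?case unfolding Dn_Suc using Suc by simp
qed

lemma Dn_id: "Dn n T (\<lambda>x. x)"
proof (cases n)
  case 0 then show ?thesis unfolding Dn_def by simp
next
  case (Suc m)
  have "deriv (\<lambda>x. x) = (\<lambda>x. 1)" by (rule ext) (rule DERIV_imp_deriv, rule DERIV_ident)
  then show ?thesis unfolding Suc Dn_Suc using Dn_const by simp
qed

lemma Dn_add:
  assumes "open T" shows "Dn n T f \<Longrightarrow> Dn n T g \<Longrightarrow> Dn n T (\<lambda>x. f x + g x)"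
proof (induction n arbitrary: f g)
  case 0 then show ?case unfolding Dn_def by auto
next
  case (Suc n)
  have df: "\<forall>s\<in>T. f differentiable (at s)" and dg: "\<forall>s\<in>T. g differentiable (at s)"
    using Suc.prems unfolding Dn_Suc by auto
  have e: "\<forall>s\<in>T. deriv f s + deriv g s = deriv (\<lambda>x. f x + g x) s"
    using df dg by (auto intro!: DERIV_imp_deriv[symmetric] DERIV_add dd)
  have "Dn n T (\<lambda>x. deriv f x + deriv g x)" using Suc unfolding Dn_Suc by blast
  then have "Dn n T (deriv (\<lambda>x. f x + g x))" by (rule Dn_cong[OF assms _ e])
  moreover have "\<forall>s\<in>T. (\<lambda>x. f x + g x) differentiable (at s)" using df dg by auto
  ultimately show ?case unfolding Dn_Suc by blast
qed

lemma Dn_mult: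
  assumes "open T" shows "Dn n T f \<Longrightarrow> Dn n T g \<Longrightarrow> Dn n T (\<lambda>x. f x * g x)"
proof (induction n arbitrary: f g)
  case 0 then show ?case unfolding Dn_def by auto
next
  case (Suc n)
  have df: "\<forall>s\<in>T. f differentiable (at s)" and dg: "\<forall>s\<in>T. g differentiable (at s)"
    using Suc.prems unfolding Dn_Suc by auto
  have e: "\<forall>s\<in>T. deriv f s * g s + f s * deriv g s = deriv (\<lambda>x. f x * g x) s"
  proof
    fix s assume s: "s \<in> T"
    have "((\<lambda>x. f x * g x) has_real_derivative deriv f s * g s + deriv g s * f s) (at s)"
      using df dg s by (intro DERIV_mult dd) auto
    then show "deriv f s * g s + f s * deriv g s = deriv (\<lambda>x. f x * g x) s"
      by (subst DERIV_imp_deriv) (auto simp: mult.commute)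
  qed
  have f1: "Dn n T (deriv f)" "Dn n T f" using Suc.prems(1) Dn_mono[OF Suc.prems(1)] unfolding Dn_Suc by auto
  have g1: "Dn n T (deriv g)" "Dn n T g" using Suc.prems(2) Dn_mono[OF Suc.prems(2)] unfolding Dn_Suc by auto
  have "Dn n T (\<lambda>x. deriv f x * g x + f x * deriv g x)"
    by (rule Dn_add[OF assms Suc.IH[OF f1(1) g1(2)] Suc.IH[OF f1(2) g1(1)]])
  then have "Dn n T (deriv (\<lambda>x. f x * g x))" by (rule Dn_cong[OF assms _ e])
  moreover have "\<forall>s\<in>T. (\<lambda>x. f x * g x) differentiable (at s)" using df dg by auto
  ultimately show ?case unfolding Dn_Suc by blast
qed

lemma Dn_comp:
  assumes T1: "open T1" and T2: "open T2"
  shows "Dn n T2 f \<Longrightarrow> Dn n T1 g \<Longrightarrow> g ` T1 \<subseteq> T2 \<Longrightarrow> Dn n T1 (\<lambda>x. f (g x))"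
proof (induction n arbitrary: f g)
  case 0
  show ?case unfolding Dn_def
  proof (intro allI impI ballI)
    fix k :: nat and s assume "k \<le> 0" "s \<in> T1"
    then have "k = 0" "g differentiable (at s)" "f differentiable (at (g s))"
      using "0.prems" unfolding Dn_def by auto
    then show "(deriv ^^ k) (\<lambda>x. f (g x)) differentiable (at s)"
      using differentiable_chain_at[of g s f] by (simp add: o_def)
  qed
next
  case (Suc n)
  have df: "\<forall>s\<in>T2. f differentiable (at s)" and dg: "\<forall>s\<in>T1. g differentiable (at s)"
    using Suc.prems unfolding Dn_Suc by auto
  have e: "\<forall>s\<in>T1. deriv f (g s) * deriv g s = deriv (\<lambda>x. f (g x)) s"
  proof
    fix s assume s: "s \<in> T1"
    then have "g s \<in> T2" using Suc.prems(3) by auto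
    then show "deriv f (g s) * deriv g s = deriv (\<lambda>x. f (g x)) s"
      using df dg s by (intro DERIV_imp_deriv[symmetric] DERIV_chain2[OF dd dd]) auto
  qed
  have f1: "Dn n T2 (deriv f)" using Suc.prems(1) unfolding Dn_Suc by auto
  have g1: "Dn n T1 (deriv g)" "Dn n T1 g" using Suc.prems(2) Dn_mono[OF Suc.prems(2)] unfolding Dn_Suc by auto
  have "Dn n T1 (\<lambda>x. deriv f (g x) * deriv g x)"
    by (rule Dn_mult[OF T1 Suc.IH[OF f1 g1(2) Suc.prems(3)] g1(1)])
  then have "Dn n T1 (deriv (\<lambda>x. f (g x)))" by (rule Dn_cong[OF T1 _ e])
  moreover have "\<forall>s\<in>T1. (\<lambda>x. f (g x)) differentiable (at s)"
  proof
    fix s assume s: "s \<in> T1"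
    then have "g s \<in> T2" using Suc.prems(3) by auto
    then have "g differentiable (at s)" "f differentiable (at (g s))" using df dg s by auto
    then show "(\<lambda>x. f (g x)) differentiable (at s)"
      using differentiable_chain_at[of g s f] by (simp add: o_def)
  qed
  ultimately show ?case unfolding Dn_Suc by blast
qed

lemma Dn_inverse: "Dn n {x. x \<noteq> 0} (\<lambda>x::real. inverse x)"
proof (induction n)
  case 0 then show ?case unfolding Dn_def by (auto intro!: derivative_intros)
next
  case (Suc n)
  have op: "open {x::real. x \<noteq> 0}" by (simp add: open_Collect_neq continuous_on_const continuous_on_id)
  have e: "\<forall>s\<in>{x. x \<noteq> 0}. (-1) * (inverse s * inverse s) = deriv (\<lambda>x::real. inverse x) s"
    by (auto intro!: DERIV_imp_deriv[symmetric] derivative_eq_intros simp: power2_eq_square divide_simps)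
  have "Dn n {x. x \<noteq> 0} (\<lambda>x::real. (-1) * (inverse x * inverse x))"
    by (intro Dn_mult[OF op] Dn_const Suc.IH)
  then have "Dn n {x. x \<noteq> 0} (deriv (\<lambda>x::real. inverse x))" by (rule Dn_cong[OF op _ e])
  moreover have "\<forall>s\<in>{x::real. x \<noteq> 0}. (\<lambda>x. inverse x) differentiable (at s)"
    by (auto intro!: derivative_intros)
  ultimately show ?case unfolding Dn_Suc by blast
qed

lemma Dn_sqrt: "Dn n {x. 0 < x} (\<lambda>x::real. sqrt x)"
proof (induction n)
  case 0 then show ?case unfolding Dn_def using DERIV_real_sqrt real_differentiable_def by fastforce
next
  case (Suc n)
  have op: "open {x::real. 0 < x}" by (simp add: open_Collect_less continuous_on_const continuous_on_id)
  have op2: "open {x::real. x \<noteq> 0}" by (simp add: open_Collect_neq continuous_on_const continuous_on_id)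
  have e: "\<forall>s\<in>{x. 0 < x}. inverse (sqrt s) * (1/2) = deriv (\<lambda>x::real. sqrt x) s"
    using DERIV_imp_deriv[OF DERIV_real_sqrt] by auto
  have "Dn n {x. 0 < x} (\<lambda>x::real. inverse (sqrt x))"
    by (rule Dn_comp[OF op op2 Dn_inverse Suc.IH]) auto
  then have "Dn n {x. 0 < x} (\<lambda>x::real. inverse (sqrt x) * (1/2))"
    by (intro Dn_mult[OF op] Dn_const)
  then have "Dn n {x. 0 < x} (deriv (\<lambda>x::real. sqrt x))" by (rule Dn_cong[OF op _ e])
  moreover have "\<forall>s\<in>{x::real. 0 < x}. (\<lambda>x. sqrt x) differentiable (at s)"
    using DERIV_real_sqrt real_differentiable_def by fastforce
  ultimately show ?case unfolding Dn_Suc by blast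
qed


lemma hF: "smooth2_on S G \<Longrightarrow> w \<in> S \<Longrightarrow> (G has_derivative (\<lambda>v. pd1 G w * fst v + pd2 G w * snd v)) (at w)"
  using pd_frechet(1)[of G "fst w" "snd w"] smooth2_diff by (cases w) auto

definition Nf :: "(real \<times> real \<Rightarrow> real) \<Rightarrow> real \<times> real \<Rightarrow> real" where
  "Nf h z = fst z * h z - (snd z)^2 * pd1 h z - snd z * fst z * pd2 h z"
definition Rf :: "(real \<times> real \<Rightarrow> real) \<Rightarrow> real \<times> real \<Rightarrow> real" where
  "Rf h z = fst z * snd z * pd1 h z + (fst z)^2 * pd2 h z - snd z * h z"
definition Ru :: "(real \<times> real \<Rightarrow> real) \<Rightarrow> real \<times> real \<Rightarrow> real" where
  "Ru h w = fst w * snd w * pd1 (pd1 h) w + 2 * fst w * pd2 h w + (fst w)^2 * pd1 (pd2 h) w"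
definition Rp :: "(real \<times> real \<Rightarrow> real) \<Rightarrow> real \<times> real \<Rightarrow> real" where
  "Rp h w = fst w * pd1 h w + fst w * snd w * pd2 (pd1 h) w + (fst w)^2 * pd2 (pd2 h) w - h w - snd w * pd2 h w"

lemma N_deriv:
  assumes hs: "smooth2_on S h" and w: "w \<in> S"
  shows "(Nf h has_derivative (\<lambda>v. EB h w * fst v - snd w * EA h w * snd v)) (at w)"
proof -
  have s1: "smooth2_on S (pd1 h)" and s2: "smooth2_on S (pd2 h)"
    using smooth2_pd1[OF hs] smooth2_pd2[OF hs] .
  have e: "Nf h = (\<lambda>z. fst z * h z - (snd z)^2 * pd1 h z - snd z * fst z * pd2 h z)"
    by (rule ext) (simp add: Nf_def)
  show ?thesis unfolding e
    by (auto intro!: derivative_eq_intros hF[OF hs w] hF[OF s1 w] hF[OF s2 w]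
         simp: fun_eq_iff EA_def EB_def algebra_simps power2_eq_square)
qed

lemma R_deriv:
  assumes hs: "smooth2_on S h" and w: "w \<in> S"
  shows "(Rf h has_derivative (\<lambda>v. Ru h w * fst v + Rp h w * snd v)) (at w)"
proof -
  have s1: "smooth2_on S (pd1 h)" and s2: "smooth2_on S (pd2 h)"
    using smooth2_pd1[OF hs] smooth2_pd2[OF hs] .
  have e: "Rf h = (\<lambda>z. fst z * snd z * pd1 h z + (fst z)^2 * pd2 h z - snd z * h z)"
    by (rule ext) (simp add: Rf_def)
  show ?thesis unfolding e
    by (auto intro!: derivative_eq_intros hF[OF hs w] hF[OF s1 w] hF[OF s2 w]
         simp: fun_eq_iff Ru_def Rp_def algebra_simps power2_eq_square)
qed

lemma R_ident: "snd w * Ru h w + fst w * Rp h w = fst w * (fst w * EA h w - EB h w)"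
  unfolding Ru_def Rp_def EA_def EB_def by (simp add: algebra_simps power2_eq_square)

lemma h_ident: "(fst z)^2 - (snd z)^2 \<noteq> 0 \<Longrightarrow>
   h z = (snd z * Rf h z + fst z * Nf h z) / ((fst z)^2 - (snd z)^2)"
  unfolding Rf_def Nf_def by (simp add: field_simps power2_eq_square)

lemma curve_deriv:
  assumes G: "(G has_derivative (\<lambda>v. Gu * fst v + Gp * snd v)) (at (x t, y t))"
    and x: "(x has_real_derivative x') (at t)" and y: "(y has_real_derivative y') (at t)"
  shows "((\<lambda>t. G (x t, y t)) has_real_derivative Gu * x' + Gp * y') (at t)"
proof -
  have c: "((\<lambda>t. (x t, y t)) has_derivative (\<lambda>h. (x' * h, y' * h))) (at t)"
    using x y unfolding has_field_derivative_def by (intro has_derivative_Pair) auto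
  have "((G \<circ> (\<lambda>t. (x t, y t))) has_derivative ((\<lambda>v. Gu * fst v + Gp * snd v) \<circ> (\<lambda>h. (x' * h, y' * h)))) (at t)"
    by (rule diff_chain_at[OF c]) (use G in simp)
  moreover have "((\<lambda>v. Gu * fst v + Gp * snd v) \<circ> (\<lambda>h. (x' * h, y' * h))) = (*) (Gu * x' + Gp * y')"
    by (auto simp: fun_eq_iff algebra_simps)
  ultimately show ?thesis unfolding has_field_derivative_def by (simp add: o_def)
qed

lemma deriv_zero_const:
  fixes f :: "real \<Rightarrow> real"
  assumes "convex I" "\<forall>t\<in>I. (f has_real_derivative 0) (at t)" "a \<in> I" "b \<in> I"
  shows "f a = f b"
proof -
  have "\<exists>c. \<forall>x\<in>I. f x = c"
  proof (rule has_derivative_zero_constant[OF assms(1)])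
    fix x
    have z: "((*) (0::real)) = (\<lambda>h. 0)" by auto
    assume "x \<in> I"
    then have "(f has_derivative (\<lambda>h. 0)) (at x)" using assms(2) unfolding has_field_derivative_def z by auto
    then show "(f has_derivative (\<lambda>h. 0)) (at x within I)" by (simp add: has_derivative_at_withinI)
  qed
  then show ?thesis using assms(3,4) by auto
qed


lemma N_deriv0:
  assumes hs: "smooth2_on S h" and w: "w \<in> S" and "EA h w = 0" "EB h w = 0"
  shows "(Nf h has_derivative (\<lambda>v. 0 * fst v + 0 * snd v)) (at w)"
  using N_deriv[OF hs w] assms(3,4) by simp

lemma ball_eq: "{x::real. \<bar>x - c\<bar> < e} = ball c e"
  by (auto simp: ball_def dist_real_def abs_minus_commute)

lemma assembly:
  fixes X Y :: "real \<Rightarrow> real \<Rightarrow> real" and \<Omega> :: "(real \<times> real) set"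
  assumes S: "open \<Omega>" and hs: "smooth2_on \<Omega> h"
    and EAz: "\<forall>w\<in>\<Omega>. EA h w = 0" and EBz: "\<forall>w\<in>\<Omega>. EB h w = 0"
    and ep: "\<epsilon> > 0"
    and inO: "\<And>\<sigma> t. \<bar>\<sigma> - s0\<bar> < \<epsilon> \<Longrightarrow> \<bar>t - t0\<bar> < \<epsilon> \<Longrightarrow> (X \<sigma> t, Y \<sigma> t) \<in> \<Omega>"
    and lev: "\<And>\<sigma> t. \<bar>\<sigma> - s0\<bar> < \<epsilon> \<Longrightarrow> \<bar>t - t0\<bar> < \<epsilon> \<Longrightarrow> (X \<sigma> t)\<^sup>2 - (Y \<sigma> t)\<^sup>2 = \<sigma>"
    and dX: "\<And>\<sigma> t. \<bar>\<sigma> - s0\<bar> < \<epsilon> \<Longrightarrow> \<bar>t - t0\<bar> < \<epsilon> \<Longrightarrow> (X \<sigma>) differentiable (at t)"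
    and dY: "\<And>\<sigma> t. \<bar>\<sigma> - s0\<bar> < \<epsilon> \<Longrightarrow> \<bar>t - t0\<bar> < \<epsilon> \<Longrightarrow> (Y \<sigma>) differentiable (at t)"
    and dXs: "\<And>\<sigma>. \<bar>\<sigma> - s0\<bar> < \<epsilon> \<Longrightarrow> (\<lambda>\<sigma>. X \<sigma> t0) differentiable (at \<sigma>)"
    and dYs: "\<And>\<sigma>. \<bar>\<sigma> - s0\<bar> < \<epsilon> \<Longrightarrow> (\<lambda>\<sigma>. Y \<sigma> t0) differentiable (at \<sigma>)"
    and nz: "\<And>\<sigma>. \<bar>\<sigma> - s0\<bar> < \<epsilon> \<Longrightarrow> \<sigma> \<noteq> 0"
    and Vo: "open V" and w0: "w0 \<in> V"
    and Vc: "\<And>z. z \<in> V \<Longrightarrow> \<exists>\<sigma> t. \<bar>\<sigma> - s0\<bar> < \<epsilon> \<and> \<bar>t - t0\<bar> < \<epsilon> \<and> z = (X \<sigma> t, Y \<sigma> t)"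
    and sm: "\<And>n. Dn n {\<sigma>. \<bar>\<sigma> - s0\<bar> < \<epsilon>} (\<lambda>\<sigma>. Rf h (X \<sigma> t0, Y \<sigma> t0))"
  shows "\<exists>V. open V \<and> w0 \<in> V \<and> V \<subseteq> \<Omega> \<and>
           (\<exists>(k1 :: real \<Rightarrow> real) (k0 :: real) T. open T \<and> (\<lambda>(a, b). a\<^sup>2 - b\<^sup>2) ` V \<subseteq> T \<and>
              smooth1_on T k1 \<and>
              (\<forall>(a, b)\<in>V. h (a, b) = b * k1 (a\<^sup>2 - b\<^sup>2) + k0 * a / (a\<^sup>2 - b\<^sup>2)))"
proof -
  define J where "J = {\<sigma>. \<bar>\<sigma> - s0\<bar> < \<epsilon>}"
  define I where "I = {t. \<bar>t - t0\<bar> < \<epsilon>}"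
  have cJ: "convex J" "open J" unfolding J_def ball_eq by auto
  have cI: "convex I" "open I" unfolding I_def ball_eq by auto
  have t0I: "t0 \<in> I" "s0 \<in> J" unfolding I_def J_def using ep by auto
  have N1: "Nf h (X \<sigma> t, Y \<sigma> t) = Nf h (X \<sigma> t0, Y \<sigma> t0)" if "\<sigma> \<in> J" "t \<in> I" for \<sigma> t
  proof (rule deriv_zero_const[OF cI(1) _ that(2) t0I(1)])
    show "\<forall>t\<in>I. ((\<lambda>t. Nf h (X \<sigma> t, Y \<sigma> t)) has_real_derivative 0) (at t)"
    proof
      fix t assume t: "t \<in> I"
      have w: "(X \<sigma> t, Y \<sigma> t) \<in> \<Omega>" using inO that t unfolding I_def J_def by auto
      have "((\<lambda>t. Nf h (X \<sigma> t, Y \<sigma> t)) has_real_derivative 0 * deriv (X \<sigma>) t + 0 * deriv (Y \<sigma>) t) (at t)"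
        by (rule curve_deriv[where x="X \<sigma>" and y="Y \<sigma>" and t=t, OF N_deriv0[OF hs w EAz[rule_format, OF w] EBz[rule_format, OF w]] dd dd])
           (use dX dY that t in \<open>auto simp: I_def J_def\<close>)
      then show "((\<lambda>t. Nf h (X \<sigma> t, Y \<sigma> t)) has_real_derivative 0) (at t)" by simp
    qed
  qed
  have N2: "Nf h (X \<sigma> t0, Y \<sigma> t0) = Nf h (X s0 t0, Y s0 t0)" if "\<sigma> \<in> J" for \<sigma>
  proof (rule deriv_zero_const[OF cJ(1) _ that t0I(2)])
    show "\<forall>\<sigma>\<in>J. ((\<lambda>\<sigma>. Nf h (X \<sigma> t0, Y \<sigma> t0)) has_real_derivative 0) (at \<sigma>)"
    proof
      fix \<sigma> assume s: "\<sigma> \<in> J"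
      have w: "(X \<sigma> t0, Y \<sigma> t0) \<in> \<Omega>" using inO s t0I unfolding I_def J_def by auto
      have "((\<lambda>\<sigma>. Nf h (X \<sigma> t0, Y \<sigma> t0)) has_real_derivative 0 * deriv (\<lambda>\<sigma>. X \<sigma> t0) \<sigma> + 0 * deriv (\<lambda>\<sigma>. Y \<sigma> t0) \<sigma>) (at \<sigma>)"
        by (rule curve_deriv[where x="\<lambda>\<sigma>. X \<sigma> t0" and y="\<lambda>\<sigma>. Y \<sigma> t0" and t=\<sigma>, OF N_deriv0[OF hs w EAz[rule_format, OF w] EBz[rule_format, OF w]] dd dd])
           (use dXs dYs s in \<open>auto simp: J_def\<close>)
      then show "((\<lambda>\<sigma>. Nf h (X \<sigma> t0, Y \<sigma> t0)) has_real_derivative 0) (at \<sigma>)" by simp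
    qed
  qed
  have R1: "Rf h (X \<sigma> t, Y \<sigma> t) = Rf h (X \<sigma> t0, Y \<sigma> t0)" if "\<sigma> \<in> J" "t \<in> I" for \<sigma> t
  proof (rule deriv_zero_const[OF cI(1) _ that(2) t0I(1)])
    show "\<forall>t\<in>I. ((\<lambda>t. Rf h (X \<sigma> t, Y \<sigma> t)) has_real_derivative 0) (at t)"
    proof
      fix t assume t: "t \<in> I"
      define u where "u = X \<sigma> t"
      define p where "p = Y \<sigma> t"
      define x' where "x' = deriv (X \<sigma>) t"
      define y' where "y' = deriv (Y \<sigma>) t"
      have w: "(u, p) \<in> \<Omega>" using inO that t unfolding I_def J_def u_def p_def by auto
      have dx: "(X \<sigma> has_real_derivative x') (at t)" unfolding x'_def
        by (rule dd) (use dX that t in \<open>auto simp: I_def J_def\<close>)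
      have dy: "(Y \<sigma> has_real_derivative y') (at t)" unfolding y'_def
        by (rule dd) (use dY that t in \<open>auto simp: I_def J_def\<close>)
      have sig: "u\<^sup>2 - p\<^sup>2 = \<sigma>" "\<sigma> \<noteq> 0" using lev nz that t unfolding u_def p_def I_def J_def by auto
      have d1: "((\<lambda>t. (X \<sigma> t)\<^sup>2 - (Y \<sigma> t)\<^sup>2) has_real_derivative 2 * u * x' - 2 * p * y') (at t)"
        using dx dy unfolding u_def p_def by (auto intro!: derivative_eq_intros)
      have d2: "((\<lambda>t. (X \<sigma> t)\<^sup>2 - (Y \<sigma> t)\<^sup>2) has_real_derivative 0) (at t)"
        by (rule has_field_derivative_transform_within_open[OF DERIV_const[of \<sigma>] cI(2) t])
           (use lev that in \<open>auto simp: I_def J_def\<close>)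
      have tang: "u * x' = p * y'" using DERIV_unique[OF d1 d2] by simp
      have RI: "p * Ru h (u, p) + u * Rp h (u, p) = 0"
        using R_ident[of "(u,p)" h] EAz EBz w by simp
      have "((\<lambda>t. Rf h (X \<sigma> t, Y \<sigma> t)) has_real_derivative Ru h (u,p) * x' + Rp h (u,p) * y') (at t)"
        by (rule curve_deriv[OF _ dx dy]) (use R_deriv[OF hs w] in \<open>simp add: u_def p_def\<close>)
      moreover have "Ru h (u,p) * x' + Rp h (u,p) * y' = 0"
      proof (cases "u = 0")
        case True
        then have "p \<noteq> 0" using sig by auto
        then have "y' = 0" "Ru h (u,p) = 0" using tang RI True by auto
        then show ?thesis by simp
      next
        case False
        have "u * (Ru h (u,p) * x' + Rp h (u,p) * y') = y' * (p * Ru h (u, p) + u * Rp h (u, p))"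
          using tang by (simp add: algebra_simps)
        then show ?thesis using RI False by simp
      qed
      ultimately show "((\<lambda>t. Rf h (X \<sigma> t, Y \<sigma> t)) has_real_derivative 0) (at t)" by simp
    qed
  qed
  define k0 where "k0 = Nf h (X s0 t0, Y s0 t0)"
  define k1 where "k1 = (\<lambda>\<sigma>. Rf h (X \<sigma> t0, Y \<sigma> t0) * inverse \<sigma>)"
  have Jnz: "J \<subseteq> {x. x \<noteq> 0}" using nz unfolding J_def by auto
  have opnz: "open {x::real. x \<noteq> 0}" by (simp add: open_Collect_neq continuous_on_const continuous_on_id)
  have "Dn n J k1" for n unfolding k1_def
    by (rule Dn_mult[OF cJ(2) sm[folded J_def] Dn_comp[OF cJ(2) opnz Dn_inverse Dn_id]]) (use Jnz in auto)
  then have smk1: "smooth1_on J k1" unfolding smooth1_on_def Dn_def by blast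
  show ?thesis
  proof (intro exI conjI)
    show "open V" by (rule Vo)
    show "w0 \<in> V" by (rule w0)
    show "V \<subseteq> \<Omega>" using Vc inO by blast
    show "open J" by (rule cJ(2))
    show "(\<lambda>(a, b). a\<^sup>2 - b\<^sup>2) ` V \<subseteq> J"
    proof
      fix y assume "y \<in> (\<lambda>(a, b). a\<^sup>2 - b\<^sup>2) ` V"
      then obtain z where z: "z \<in> V" "y = (\<lambda>(a, b). a\<^sup>2 - b\<^sup>2) z" by blast
      obtain \<sigma> t where st: "\<bar>\<sigma> - s0\<bar> < \<epsilon>" "\<bar>t - t0\<bar> < \<epsilon>" "z = (X \<sigma> t, Y \<sigma> t)" using Vc[OF z(1)] by blast
      show "y \<in> J" using z(2) st lev unfolding J_def by auto
    qed
    show "smooth1_on J k1" by (rule smk1)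
    show "\<forall>(a, b)\<in>V. h (a, b) = b * k1 (a\<^sup>2 - b\<^sup>2) + k0 * a / (a\<^sup>2 - b\<^sup>2)"
    proof (clarify)
      fix a b assume ab: "(a, b) \<in> V"
      obtain \<sigma> t where st: "\<bar>\<sigma> - s0\<bar> < \<epsilon>" "\<bar>t - t0\<bar> < \<epsilon>" "(a, b) = (X \<sigma> t, Y \<sigma> t)" using Vc[OF ab] by blast
      have sJ: "\<sigma> \<in> J" "t \<in> I" using st unfolding J_def I_def by auto
      have sig: "a\<^sup>2 - b\<^sup>2 = \<sigma>" "\<sigma> \<noteq> 0" using lev[OF st(1,2)] nz[OF st(1)] st(3) by auto
      have Nv: "Nf h (a, b) = k0" using N1[OF sJ] N2[OF sJ(1)] st(3) unfolding k0_def by simp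
      have Rv: "Rf h (a, b) = \<sigma> * k1 \<sigma>" using R1[OF sJ] st(3) sig(2) unfolding k1_def by simp
      have "h (a, b) = (b * Rf h (a,b) + a * Nf h (a,b)) / (a\<^sup>2 - b\<^sup>2)"
        using h_ident[of "(a,b)" h] sig by simp
      also have "\<dots> = b * k1 (a\<^sup>2 - b\<^sup>2) + k0 * a / (a\<^sup>2 - b\<^sup>2)"
        unfolding Nv Rv sig(1) using sig(2) by (simp add: field_simps)
      finally show "h (a, b) = b * k1 (a\<^sup>2 - b\<^sup>2) + k0 * a / (a\<^sup>2 - b\<^sup>2)" .
    qed
  qed
qed


lemma open_slice1: "open (S :: (real \<times> real) set) \<Longrightarrow> open {t. (t, c) \<in> S}"
proof -
  assume S: "open S"
  have "continuous_on UNIV (\<lambda>t::real. (t, c))" by (intro continuous_intros)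
  then have "open ((\<lambda>t. (t, c)) -` S \<inter> UNIV)" using continuous_on_open_vimage[OF open_UNIV] S by blast
  then show ?thesis by (simp add: vimage_def)
qed

lemma open_slice2: "open (S :: (real \<times> real) set) \<Longrightarrow> open {t. (c, t) \<in> S}"
proof -
  assume S: "open S"
  have "continuous_on UNIV (\<lambda>t::real. (c, t))" by (intro continuous_intros)
  then have "open ((\<lambda>t. (c, t)) -` S \<inter> UNIV)" using continuous_on_open_vimage[OF open_UNIV] S by blast
  then show ?thesis by (simp add: vimage_def)
qed

lemma Dn_slice1:
  assumes S: "open S" shows "smooth2_on S G \<Longrightarrow> Dn n {t. (t, c) \<in> S} (\<lambda>t. G (t, c))"
proof (induction n arbitrary: G)
  case 0 then show ?case unfolding Dn_def using pdD1 real_differentiable_def by fastforce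
next
  case (Suc n)
  have d: "\<forall>s\<in>{t. (t, c) \<in> S}. (\<lambda>t. G (t, c)) differentiable (at s)"
    using pdD1[OF Suc.prems] real_differentiable_def by fastforce
  have e: "\<forall>s\<in>{t. (t, c) \<in> S}. pd1 G (s, c) = deriv (\<lambda>t. G (t, c)) s"
    using pdD1[OF Suc.prems] DERIV_imp_deriv by (metis mem_Collect_eq)
  have "Dn n {t. (t, c) \<in> S} (deriv (\<lambda>t. G (t, c)))"
    by (rule Dn_cong[OF open_slice1[OF S] Suc.IH[OF smooth2_pd1[OF Suc.prems]] e])
  then show ?case unfolding Dn_Suc using d by blast
qed

lemma Dn_slice2:
  assumes S: "open S" shows "smooth2_on S G \<Longrightarrow> Dn n {t. (c, t) \<in> S} (\<lambda>t. G (c, t))"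
proof (induction n arbitrary: G)
  case 0 then show ?case unfolding Dn_def using pdD2 real_differentiable_def by fastforce
next
  case (Suc n)
  have d: "\<forall>s\<in>{t. (c, t) \<in> S}. (\<lambda>t. G (c, t)) differentiable (at s)"
    using pdD2[OF Suc.prems] real_differentiable_def by fastforce
  have e: "\<forall>s\<in>{t. (c, t) \<in> S}. pd2 G (c, s) = deriv (\<lambda>t. G (c, t)) s"
    using pdD2[OF Suc.prems] DERIV_imp_deriv by (metis mem_Collect_eq)
  have "Dn n {t. (c, t) \<in> S} (deriv (\<lambda>t. G (c, t)))"
    by (rule Dn_cong[OF open_slice2[OF S] Suc.IH[OF smooth2_pd2[OF Suc.prems]] e])
  then show ?case unfolding Dn_Suc using d by blast
qed

lemma Dn_sub:
  assumes "open T" "Dn n T f" "Dn n T g" shows "Dn n T (\<lambda>x. f x - g x)"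
proof -
  have "Dn n T (\<lambda>x. f x + (-1) * g x)" by (intro Dn_add Dn_mult assms Dn_const)
  then show ?thesis by (rule Dn_cong[OF assms(1)]) auto
qed

lemma box_in_open:
  fixes \<Phi> :: "real \<times> real \<Rightarrow> real \<times> real"
  assumes "open \<Omega>" "isCont \<Phi> (a, b)" "\<Phi> (a, b) \<in> \<Omega>"
  shows "\<exists>\<delta>>0. \<forall>\<sigma> t. \<bar>\<sigma> - a\<bar> < \<delta> \<longrightarrow> \<bar>t - b\<bar> < \<delta> \<longrightarrow> \<Phi> (\<sigma>, t) \<in> \<Omega>"
proof -
  obtain r where r: "r > 0" "ball (\<Phi> (a, b)) r \<subseteq> \<Omega>" using assms(1,3) openE by blast
  obtain d where d: "d > 0" "\<forall>z. dist z (a, b) < d \<longrightarrow> dist (\<Phi> z) (\<Phi> (a, b)) < r"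
    using assms(2) r(1) unfolding continuous_at_eps_delta by blast
  show ?thesis
  proof (intro exI[of _ "d/2"] conjI allI impI)
    show "d / 2 > 0" using d by simp
    fix \<sigma> t assume a: "\<bar>\<sigma> - a\<bar> < d / 2" "\<bar>t - b\<bar> < d / 2"
    have "dist (\<sigma>, t) (a, b) = sqrt ((\<sigma> - a)\<^sup>2 + (t - b)\<^sup>2)" by (simp add: dist_Pair_Pair dist_real_def)
    also have "\<dots> \<le> \<bar>\<sigma> - a\<bar> + \<bar>t - b\<bar>" by (rule sqrt_sum_squares_le_sum_abs)
    finally have "dist (\<sigma>, t) (a, b) < d" using a by simp
    then have "dist (\<Phi> (\<sigma>, t)) (\<Phi> (a, b)) < r" using d by blast
    then show "\<Phi> (\<sigma>, t) \<in> \<Omega>" using r(2) by (auto simp: dist_commute)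
  qed
qed

lemma sqrt_diff:
  assumes "0 < g x" "(g has_real_derivative g') (at x)"
  shows "(\<lambda>t. c * sqrt (g t)) differentiable (at x)"
proof -
  have "((\<lambda>t. c * sqrt (g t)) has_real_derivative c * (inverse (sqrt (g x)) / 2 * g')) (at x)"
    by (intro DERIV_cmult DERIV_chain2[OF DERIV_real_sqrt[OF assms(1)] assms(2)])
  then show ?thesis using real_differentiable_def by blast
qed


lemma sgn_abs_eq: "(e::real) = 1 \<or> e = -1 \<Longrightarrow> 0 < e * x \<Longrightarrow> e * \<bar>x\<bar> = x"
  by (auto simp: abs_if mult_less_0_iff zero_less_mult_iff)

lemma caseA:
  fixes \<Omega> :: "(real \<times> real) set"
  assumes S: "open \<Omega>" and hs: "smooth2_on \<Omega> h"
    and EAz: "\<forall>w\<in>\<Omega>. EA h w = 0" and EBz: "\<forall>w\<in>\<Omega>. EB h w = 0"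
    and w: "(u0, q0) \<in> \<Omega>" and pos: "u0\<^sup>2 - q0\<^sup>2 > 0"
  shows "\<exists>V. open V \<and> (u0, q0) \<in> V \<and> V \<subseteq> \<Omega> \<and>
           (\<exists>(k1 :: real \<Rightarrow> real) (k0 :: real) T. open T \<and> (\<lambda>(a, b). a\<^sup>2 - b\<^sup>2) ` V \<subseteq> T \<and>
              smooth1_on T k1 \<and>
              (\<forall>(a, b)\<in>V. h (a, b) = b * k1 (a\<^sup>2 - b\<^sup>2) + k0 * a / (a\<^sup>2 - b\<^sup>2)))"
proof -
  define s0 where "s0 = u0\<^sup>2 - q0\<^sup>2"
  define e where "e = sgn u0"
  have u0: "u0 \<noteq> 0" using pos by auto
  have e1: "e = 1 \<or> e = -1" "0 < e * u0" using u0 unfolding e_def by (auto simp: sgn_if)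
  have e2: "e * e = 1" using e1 by auto
  have e3: "e * sqrt (u0\<^sup>2) = u0" using sgn_abs_eq[OF e1] by simp
  define \<Phi> where "\<Phi> = (\<lambda>z::real \<times> real. (e * sqrt (fst z + (snd z)\<^sup>2), snd z))"
  have cont: "isCont \<Phi> (s0, q0)" unfolding \<Phi>_def by (intro continuous_intros)
  have P0: "\<Phi> (s0, q0) \<in> \<Omega>" unfolding \<Phi>_def s0_def using e3 w by simp
  obtain \<delta> where \<delta>: "\<delta> > 0" "\<forall>\<sigma> t. \<bar>\<sigma> - s0\<bar> < \<delta> \<longrightarrow> \<bar>t - q0\<bar> < \<delta> \<longrightarrow> \<Phi> (\<sigma>, t) \<in> \<Omega>"
    using box_in_open[OF S cont P0] by blast
  define \<epsilon> where "\<epsilon> = min \<delta> (s0 / 2)"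
  have ep: "\<epsilon> > 0" using \<delta> pos unfolding \<epsilon>_def s0_def by auto
  have sp: "0 < \<sigma>" if "\<bar>\<sigma> - s0\<bar> < \<epsilon>" for \<sigma>
  proof -
    have "\<bar>\<sigma> - s0\<bar> < s0 / 2" using that unfolding \<epsilon>_def by simp
    then show ?thesis using abs_less_iff[of "\<sigma> - s0" "s0 / 2"] by linarith
  qed
  have inO: "(e * sqrt (\<sigma> + t\<^sup>2), t) \<in> \<Omega>" if "\<bar>\<sigma> - s0\<bar> < \<epsilon>" "\<bar>t - q0\<bar> < \<epsilon>" for \<sigma> t
    using \<delta>(2) that unfolding \<epsilon>_def \<Phi>_def by auto
  define V where "V = {z::real \<times> real. 0 < e * fst z \<and> \<bar>(fst z)\<^sup>2 - (snd z)\<^sup>2 - s0\<bar> < \<epsilon> \<and> \<bar>snd z - q0\<bar> < \<epsilon>}"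
  have oV: "open V" unfolding V_def
    by (intro open_Collect_conj open_Collect_less continuous_intros)
  have wV: "(u0, q0) \<in> V" unfolding V_def s0_def using e1 ep by simp
  have Vc: "\<exists>\<sigma> t. \<bar>\<sigma> - s0\<bar> < \<epsilon> \<and> \<bar>t - q0\<bar> < \<epsilon> \<and> z = (e * sqrt (\<sigma> + t\<^sup>2), t)" if "z \<in> V" for z
  proof (intro exI conjI)
    show "\<bar>(fst z)\<^sup>2 - (snd z)\<^sup>2 - s0\<bar> < \<epsilon>" "\<bar>snd z - q0\<bar> < \<epsilon>" using that unfolding V_def by auto
    have "e * sqrt ((fst z)\<^sup>2) = fst z" using sgn_abs_eq[OF e1(1)] that unfolding V_def by simp
    then show "z = (e * sqrt ((fst z)\<^sup>2 - (snd z)\<^sup>2 + (snd z)\<^sup>2), snd z)" by (cases z) simp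
  qed
  define J where "J = {\<sigma>. \<bar>\<sigma> - s0\<bar> < \<epsilon>}"
  have oJ: "open J" unfolding J_def ball_eq by simp
  have opos: "open {x::real. 0 < x}" by (simp add: open_Collect_less continuous_on_const continuous_on_id)
  define x where "x = (\<lambda>\<sigma>. e * sqrt (\<sigma> + q0\<^sup>2))"
  have Dx: "Dn n J x" for n unfolding x_def
    by (rule Dn_mult[OF oJ Dn_const Dn_comp[OF oJ opos Dn_sqrt Dn_add[OF oJ Dn_id Dn_const]]])
       (use sp in \<open>auto simp: J_def intro: add_pos_nonneg\<close>)
  have xJ: "x ` J \<subseteq> {t. (t, q0) \<in> \<Omega>}" using inO[of _ q0] ep unfolding x_def J_def by auto
  have DG: "Dn n J (\<lambda>\<sigma>. G (x \<sigma>, q0))" if "smooth2_on \<Omega> G" for G n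
    by (rule Dn_comp[OF oJ open_slice1[OF S] Dn_slice1[OF S that] Dx xJ])
  have sm1: "Dn n J (\<lambda>\<sigma>. x \<sigma> * q0 * pd1 h (x \<sigma>, q0) + x \<sigma> * x \<sigma> * pd2 h (x \<sigma>, q0) - q0 * h (x \<sigma>, q0))" for n
    by (intro Dn_sub Dn_add Dn_mult oJ Dx Dn_const DG hs smooth2_pd1 smooth2_pd2)
  have sm: "Dn n J (\<lambda>\<sigma>. Rf h (e * sqrt (\<sigma> + q0\<^sup>2), q0))" for n
    by (rule Dn_cong[OF oJ sm1]) (simp add: Rf_def x_def power2_eq_square)
  show ?thesis
  proof (rule assembly[where X="\<lambda>\<sigma> t. e * sqrt (\<sigma> + t\<^sup>2)" and Y="\<lambda>\<sigma> t. t" and ?t0.0=q0 and ?s0.0=s0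
        and \<epsilon>=\<epsilon> and V=V, OF S hs EAz EBz ep])
    show "\<And>\<sigma> t. \<bar>\<sigma> - s0\<bar> < \<epsilon> \<Longrightarrow> \<bar>t - q0\<bar> < \<epsilon> \<Longrightarrow> (e * sqrt (\<sigma> + t\<^sup>2), t) \<in> \<Omega>" by (rule inO)
    show "\<And>\<sigma> t. \<bar>\<sigma> - s0\<bar> < \<epsilon> \<Longrightarrow> \<bar>t - q0\<bar> < \<epsilon> \<Longrightarrow> (e * sqrt (\<sigma> + t\<^sup>2))\<^sup>2 - t\<^sup>2 = \<sigma>"
    proof -
      fix \<sigma> t assume "\<bar>\<sigma> - s0\<bar> < \<epsilon>"
      then have "0 \<le> \<sigma> + t\<^sup>2" using sp[of \<sigma>] by (simp add: add_nonneg_nonneg)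
      then show "(e * sqrt (\<sigma> + t\<^sup>2))\<^sup>2 - t\<^sup>2 = \<sigma>" by (simp add: power_mult_distrib e1 power2_eq_square[of e] e2)
    qed
    show "\<And>\<sigma> t. \<bar>\<sigma> - s0\<bar> < \<epsilon> \<Longrightarrow> \<bar>t - q0\<bar> < \<epsilon> \<Longrightarrow> (\<lambda>t. e * sqrt (\<sigma> + t\<^sup>2)) differentiable (at t)"
    proof -
      fix \<sigma> t assume "\<bar>\<sigma> - s0\<bar> < \<epsilon>"
      then have "0 < \<sigma> + t\<^sup>2" using sp[of \<sigma>] by (simp add: add_pos_nonneg)
      then show "(\<lambda>t. e * sqrt (\<sigma> + t\<^sup>2)) differentiable (at t)"
        by (rule sqrt_diff[where g="\<lambda>t. \<sigma> + t\<^sup>2" and g'="2 * t"]) (auto intro!: derivative_eq_intros)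
    qed
    show "\<And>\<sigma> t. \<bar>\<sigma> - s0\<bar> < \<epsilon> \<Longrightarrow> \<bar>t - q0\<bar> < \<epsilon> \<Longrightarrow> (\<lambda>t. t) differentiable (at t)"
      by simp
    show "\<And>\<sigma>. \<bar>\<sigma> - s0\<bar> < \<epsilon> \<Longrightarrow> (\<lambda>\<sigma>. e * sqrt (\<sigma> + q0\<^sup>2)) differentiable (at \<sigma>)"
    proof -
      fix \<sigma> assume "\<bar>\<sigma> - s0\<bar> < \<epsilon>"
      then have "0 < \<sigma> + q0\<^sup>2" using sp[of \<sigma>] by (simp add: add_pos_nonneg)
      then show "(\<lambda>\<sigma>. e * sqrt (\<sigma> + q0\<^sup>2)) differentiable (at \<sigma>)"
        by (rule sqrt_diff[where g="\<lambda>\<sigma>. \<sigma> + q0\<^sup>2" and g'="1"]) (auto intro!: derivative_eq_intros)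
    qed
    show "\<And>\<sigma>. \<bar>\<sigma> - s0\<bar> < \<epsilon> \<Longrightarrow> (\<lambda>\<sigma>. q0) differentiable (at \<sigma>)" by simp
    show "\<And>\<sigma>. \<bar>\<sigma> - s0\<bar> < \<epsilon> \<Longrightarrow> \<sigma> \<noteq> 0" using sp by fastforce
    show "open V" by (rule oV)
    show "(u0, q0) \<in> V" by (rule wV)
    show "\<And>z. z \<in> V \<Longrightarrow> \<exists>\<sigma> t. \<bar>\<sigma> - s0\<bar> < \<epsilon> \<and> \<bar>t - q0\<bar> < \<epsilon> \<and> z = (e * sqrt (\<sigma> + t\<^sup>2), t)"
      by (rule Vc)
    show "\<And>n. Dn n {\<sigma>. \<bar>\<sigma> - s0\<bar> < \<epsilon>} (\<lambda>\<sigma>. Rf h (e * sqrt (\<sigma> + q0\<^sup>2), q0))"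
      using sm unfolding J_def .
  qed
qed


lemma caseB:
  fixes \<Omega> :: "(real \<times> real) set"
  assumes S: "open \<Omega>" and hs: "smooth2_on \<Omega> h"
    and EAz: "\<forall>w\<in>\<Omega>. EA h w = 0" and EBz: "\<forall>w\<in>\<Omega>. EB h w = 0"
    and w: "(u0, q0) \<in> \<Omega>" and neg: "u0\<^sup>2 - q0\<^sup>2 < 0"
  shows "\<exists>V. open V \<and> (u0, q0) \<in> V \<and> V \<subseteq> \<Omega> \<and>
           (\<exists>(k1 :: real \<Rightarrow> real) (k0 :: real) T. open T \<and> (\<lambda>(a, b). a\<^sup>2 - b\<^sup>2) ` V \<subseteq> T \<and>
              smooth1_on T k1 \<and>
              (\<forall>(a, b)\<in>V. h (a, b) = b * k1 (a\<^sup>2 - b\<^sup>2) + k0 * a / (a\<^sup>2 - b\<^sup>2)))"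
proof -
  define s0 where "s0 = u0\<^sup>2 - q0\<^sup>2"
  define e where "e = sgn q0"
  have q0: "q0 \<noteq> 0" using neg by auto
  have e1: "e = 1 \<or> e = -1" "0 < e * q0" using q0 unfolding e_def by (auto simp: sgn_if)
  have e2: "e * e = 1" using e1 by auto
  have e3: "e * sqrt (q0\<^sup>2) = q0" using sgn_abs_eq[OF e1] by simp
  define \<Phi> where "\<Phi> = (\<lambda>z::real \<times> real. (snd z, e * sqrt ((snd z)\<^sup>2 - fst z)))"
  have cont: "isCont \<Phi> (s0, u0)" unfolding \<Phi>_def by (intro continuous_intros)
  have P0: "\<Phi> (s0, u0) \<in> \<Omega>" unfolding \<Phi>_def s0_def using e3 w by simp
  obtain \<delta> where \<delta>: "\<delta> > 0" "\<forall>\<sigma> t. \<bar>\<sigma> - s0\<bar> < \<delta> \<longrightarrow> \<bar>t - u0\<bar> < \<delta> \<longrightarrow> \<Phi> (\<sigma>, t) \<in> \<Omega>"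
    using box_in_open[OF S cont P0] by blast
  define \<epsilon> where "\<epsilon> = min \<delta> (- s0 / 2)"
  have ep: "\<epsilon> > 0" using \<delta> neg unfolding \<epsilon>_def s0_def by auto
  have sp: "\<sigma> < 0" if "\<bar>\<sigma> - s0\<bar> < \<epsilon>" for \<sigma>
  proof -
    have "\<bar>\<sigma> - s0\<bar> < - s0 / 2" using that unfolding \<epsilon>_def by simp
    then show ?thesis using abs_less_iff[of "\<sigma> - s0" "- s0 / 2"] by linarith
  qed
  have inO: "(t, e * sqrt (t\<^sup>2 - \<sigma>)) \<in> \<Omega>" if "\<bar>\<sigma> - s0\<bar> < \<epsilon>" "\<bar>t - u0\<bar> < \<epsilon>" for \<sigma> t
    using \<delta>(2) that unfolding \<epsilon>_def \<Phi>_def by auto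
  define V where "V = {z::real \<times> real. 0 < e * snd z \<and> \<bar>(fst z)\<^sup>2 - (snd z)\<^sup>2 - s0\<bar> < \<epsilon> \<and> \<bar>fst z - u0\<bar> < \<epsilon>}"
  have oV: "open V" unfolding V_def
    by (intro open_Collect_conj open_Collect_less continuous_intros)
  have wV: "(u0, q0) \<in> V" unfolding V_def s0_def using e1 ep by simp
  have Vc: "\<exists>\<sigma> t. \<bar>\<sigma> - s0\<bar> < \<epsilon> \<and> \<bar>t - u0\<bar> < \<epsilon> \<and> z = (t, e * sqrt (t\<^sup>2 - \<sigma>))" if "z \<in> V" for z
  proof (intro exI conjI)
    show "\<bar>(fst z)\<^sup>2 - (snd z)\<^sup>2 - s0\<bar> < \<epsilon>" "\<bar>fst z - u0\<bar> < \<epsilon>" using that unfolding V_def by auto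
    have "e * sqrt ((snd z)\<^sup>2) = snd z" using sgn_abs_eq[OF e1(1)] that unfolding V_def by simp
    then show "z = (fst z, e * sqrt ((fst z)\<^sup>2 - ((fst z)\<^sup>2 - (snd z)\<^sup>2)))" by (cases z) simp
  qed
  define J where "J = {\<sigma>. \<bar>\<sigma> - s0\<bar> < \<epsilon>}"
  have oJ: "open J" unfolding J_def ball_eq by simp
  have opos: "open {x::real. 0 < x}" by (simp add: open_Collect_less continuous_on_const continuous_on_id)
  define y where "y = (\<lambda>\<sigma>. e * sqrt (u0\<^sup>2 - \<sigma>))"
  have ypos: "0 < u0\<^sup>2 - \<sigma>" if "\<sigma> \<in> J" for \<sigma>
  proof -
    have "\<sigma> < 0" using sp[of \<sigma>] that unfolding J_def by simp
    moreover have "0 \<le> u0\<^sup>2" by simp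
    ultimately show ?thesis by linarith
  qed
  have Dy: "Dn n J y" for n unfolding y_def
    by (rule Dn_mult[OF oJ Dn_const Dn_comp[OF oJ opos Dn_sqrt Dn_sub[OF oJ Dn_const Dn_id]]])
       (use ypos in auto)
  have yJ: "y ` J \<subseteq> {t. (u0, t) \<in> \<Omega>}" using inO[of _ u0] ep unfolding y_def J_def by auto
  have DG: "Dn n J (\<lambda>\<sigma>. G (u0, y \<sigma>))" if "smooth2_on \<Omega> G" for G n
    by (rule Dn_comp[OF oJ open_slice2[OF S] Dn_slice2[OF S that] Dy yJ])
  have sm1: "Dn n J (\<lambda>\<sigma>. u0 * y \<sigma> * pd1 h (u0, y \<sigma>) + u0 * u0 * pd2 h (u0, y \<sigma>) - y \<sigma> * h (u0, y \<sigma>))" for n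
    by (intro Dn_sub Dn_add Dn_mult oJ Dy Dn_const DG hs smooth2_pd1 smooth2_pd2)
  have sm: "Dn n J (\<lambda>\<sigma>. Rf h (u0, e * sqrt (u0\<^sup>2 - \<sigma>)))" for n
    by (rule Dn_cong[OF oJ sm1]) (simp add: Rf_def y_def power2_eq_square)
  show ?thesis
  proof (rule assembly[where X="\<lambda>\<sigma> t. t" and Y="\<lambda>\<sigma> t. e * sqrt (t\<^sup>2 - \<sigma>)" and ?t0.0=u0 and ?s0.0=s0
        and \<epsilon>=\<epsilon> and V=V, OF S hs EAz EBz ep])
    show "\<And>\<sigma> t. \<bar>\<sigma> - s0\<bar> < \<epsilon> \<Longrightarrow> \<bar>t - u0\<bar> < \<epsilon> \<Longrightarrow> (t, e * sqrt (t\<^sup>2 - \<sigma>)) \<in> \<Omega>" by (rule inO)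
    show "\<And>\<sigma> t. \<bar>\<sigma> - s0\<bar> < \<epsilon> \<Longrightarrow> \<bar>t - u0\<bar> < \<epsilon> \<Longrightarrow> t\<^sup>2 - (e * sqrt (t\<^sup>2 - \<sigma>))\<^sup>2 = \<sigma>"
    proof -
      fix \<sigma> t assume "\<bar>\<sigma> - s0\<bar> < \<epsilon>"
      then have "0 \<le> t\<^sup>2 - \<sigma>" using sp[of \<sigma>] zero_le_power2[of t] by linarith
      then show "t\<^sup>2 - (e * sqrt (t\<^sup>2 - \<sigma>))\<^sup>2 = \<sigma>" by (simp add: power_mult_distrib power2_eq_square[of e] e2)
    qed
    show "\<And>\<sigma> t. \<bar>\<sigma> - s0\<bar> < \<epsilon> \<Longrightarrow> \<bar>t - u0\<bar> < \<epsilon> \<Longrightarrow> (\<lambda>t. t) differentiable (at t)"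
      by simp
    show "\<And>\<sigma> t. \<bar>\<sigma> - s0\<bar> < \<epsilon> \<Longrightarrow> \<bar>t - u0\<bar> < \<epsilon> \<Longrightarrow> (\<lambda>t. e * sqrt (t\<^sup>2 - \<sigma>)) differentiable (at t)"
    proof -
      fix \<sigma> t assume "\<bar>\<sigma> - s0\<bar> < \<epsilon>"
      then have "0 < t\<^sup>2 - \<sigma>" using sp[of \<sigma>] zero_le_power2[of t] by linarith
      then show "(\<lambda>t. e * sqrt (t\<^sup>2 - \<sigma>)) differentiable (at t)"
        by (rule sqrt_diff[where g="\<lambda>t. t\<^sup>2 - \<sigma>" and g'="2 * t"]) (auto intro!: derivative_eq_intros)
    qed
    show "\<And>\<sigma>. \<bar>\<sigma> - s0\<bar> < \<epsilon> \<Longrightarrow> (\<lambda>\<sigma>. u0) differentiable (at \<sigma>)" by simp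
    show "\<And>\<sigma>. \<bar>\<sigma> - s0\<bar> < \<epsilon> \<Longrightarrow> (\<lambda>\<sigma>. e * sqrt (u0\<^sup>2 - \<sigma>)) differentiable (at \<sigma>)"
    proof -
      fix \<sigma> assume "\<bar>\<sigma> - s0\<bar> < \<epsilon>"
      then have "0 < u0\<^sup>2 - \<sigma>" using sp[of \<sigma>] zero_le_power2[of u0] by linarith
      then show "(\<lambda>\<sigma>. e * sqrt (u0\<^sup>2 - \<sigma>)) differentiable (at \<sigma>)"
        by (rule sqrt_diff[where g="\<lambda>\<sigma>. u0\<^sup>2 - \<sigma>" and g'="-1"]) (auto intro!: derivative_eq_intros)
    qed
    show "\<And>\<sigma>. \<bar>\<sigma> - s0\<bar> < \<epsilon> \<Longrightarrow> \<sigma> \<noteq> 0" using sp by fastforce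
    show "open V" by (rule oV)
    show "(u0, q0) \<in> V" by (rule wV)
    show "\<And>z. z \<in> V \<Longrightarrow> \<exists>\<sigma> t. \<bar>\<sigma> - s0\<bar> < \<epsilon> \<and> \<bar>t - u0\<bar> < \<epsilon> \<and> z = (t, e * sqrt (t\<^sup>2 - \<sigma>))"
      by (rule Vc)
    show "\<And>n. Dn n {\<sigma>. \<bar>\<sigma> - s0\<bar> < \<epsilon>} (\<lambda>\<sigma>. Rf h (u0, e * sqrt (u0\<^sup>2 - \<sigma>)))"
      using sm unfolding J_def .
  qed
qed


lemma chainT:
  assumes "\<forall>x\<in>T. (k has_real_derivative k' x) (at x)" "(g has_real_derivative g') (at t)" "g t \<in> T"
    "D = k' (g t) * g'"
  shows "((\<lambda>t. k (g t)) has_real_derivative D) (at t)"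
  using DERIV_chain2[of k "k' (g t)" g t g'] assms by auto

lemma pd1_DERIV:
  fixes V :: "(real \<times> real) set"
  assumes "open V" "(a, b) \<in> V" "\<forall>x y. (x, y) \<in> V \<longrightarrow> G (x, y) = F x y"
    "((\<lambda>t. F t b) has_real_derivative D) (at a)"
  shows "pd1 G (a, b) = D"
proof -
  have "eventually (\<lambda>t. G (t, b) = F t b) (nhds a)"
    using ev_fst[OF assms(1,2)] assms(3) by (auto elim!: eventually_mono)
  then have "deriv (\<lambda>t. G (t, b)) a = deriv (\<lambda>t. F t b) a" by (rule deriv_cong_ev) simp
  then show ?thesis unfolding pd1_def using DERIV_imp_deriv[OF assms(4)] by simp
qed

lemma pd2_DERIV:
  fixes V :: "(real \<times> real) set"
  assumes "open V" "(a, b) \<in> V" "\<forall>x y. (x, y) \<in> V \<longrightarrow> G (x, y) = F x y"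
    "((\<lambda>t. F a t) has_real_derivative D) (at b)"
  shows "pd2 G (a, b) = D"
proof -
  have "eventually (\<lambda>t. G (a, t) = F a t) (nhds b)"
    using ev_snd[OF assms(1,2)] assms(3) by (auto elim!: eventually_mono)
  then have "deriv (\<lambda>t. G (a, t)) b = deriv (\<lambda>t. F a t) b" by (rule deriv_cong_ev) simp
  then show ?thesis unfolding pd2_def using DERIV_imp_deriv[OF assms(4)] by simp
qed

definition qq :: "real \<Rightarrow> real \<Rightarrow> real" where "qq y t = t / (t\<^sup>2 - y\<^sup>2)"
definition PP :: "real \<Rightarrow> real \<Rightarrow> real" where "PP a b = (a\<^sup>2 + b\<^sup>2) / (a\<^sup>2 - b\<^sup>2)\<^sup>2"
definition RR :: "real \<Rightarrow> real \<Rightarrow> real" where "RR a b = a * b / (a\<^sup>2 - b\<^sup>2)\<^sup>2"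
definition AA :: "real \<Rightarrow> real \<Rightarrow> real" where "AA a b = a * (a\<^sup>2 + 3 * b\<^sup>2) / (a\<^sup>2 - b\<^sup>2)^3"
definition BB :: "real \<Rightarrow> real \<Rightarrow> real" where "BB a b = b * (3 * a\<^sup>2 + b\<^sup>2) / (a\<^sup>2 - b\<^sup>2)^3"

lemma qa: assumes "x\<^sup>2 - y\<^sup>2 \<noteq> (0::real)" "D = - PP x y"
  shows "((\<lambda>t. qq y t) has_real_derivative D) (at x)"
proof -
  have "((\<lambda>t. t / (t\<^sup>2 - y\<^sup>2)) has_real_derivative (1 * (x\<^sup>2 - y\<^sup>2) - x * (2 * x)) / ((x\<^sup>2 - y\<^sup>2) * (x\<^sup>2 - y\<^sup>2))) (at x)"
    by (rule DERIV_divide) (use assms in \<open>auto intro!: derivative_eq_intros\<close>)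
  moreover have "(1 * (x\<^sup>2 - y\<^sup>2) - x * (2 * x)) / ((x\<^sup>2 - y\<^sup>2) * (x\<^sup>2 - y\<^sup>2)) = D"
    unfolding assms(2) PP_def using assms(1) by (simp add: divide_simps) (simp add: algebra_simps power2_eq_square)
  ultimately show ?thesis unfolding qq_def by simp
qed

lemma qb: assumes "x\<^sup>2 - y\<^sup>2 \<noteq> (0::real)" "D = 2 * RR x y"
  shows "((\<lambda>t. qq t x) has_real_derivative D) (at y)"
proof -
  have "((\<lambda>t. x / (x\<^sup>2 - t\<^sup>2)) has_real_derivative (0 * (x\<^sup>2 - y\<^sup>2) - x * (0 - 2 * y)) / ((x\<^sup>2 - y\<^sup>2) * (x\<^sup>2 - y\<^sup>2))) (at y)"
    by (rule DERIV_divide) (use assms in \<open>auto intro!: derivative_eq_intros\<close>)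
  moreover have "(0 * (x\<^sup>2 - y\<^sup>2) - x * (0 - 2 * y)) / ((x\<^sup>2 - y\<^sup>2) * (x\<^sup>2 - y\<^sup>2)) = D"
    unfolding assms(2) RR_def using assms(1) by (simp add: divide_simps) (simp add: algebra_simps power2_eq_square)
  ultimately show ?thesis unfolding qq_def by simp
qed

lemma Pa: assumes "x\<^sup>2 - y\<^sup>2 \<noteq> (0::real)" "D = - 2 * AA x y"
  shows "((\<lambda>t. PP t y) has_real_derivative D) (at x)"
proof -
  have "((\<lambda>t. (t\<^sup>2 + y\<^sup>2) / (t\<^sup>2 - y\<^sup>2)\<^sup>2) has_real_derivative ((2 * x) * (x\<^sup>2 - y\<^sup>2)\<^sup>2 - (x\<^sup>2 + y\<^sup>2) * (2 * (x\<^sup>2 - y\<^sup>2) * (2 * x))) / ((x\<^sup>2 - y\<^sup>2)\<^sup>2 * (x\<^sup>2 - y\<^sup>2)\<^sup>2)) (at x)"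
    by (rule DERIV_divide) (use assms in \<open>auto intro!: derivative_eq_intros\<close>)
  moreover have "((2 * x) * (x\<^sup>2 - y\<^sup>2)\<^sup>2 - (x\<^sup>2 + y\<^sup>2) * (2 * (x\<^sup>2 - y\<^sup>2) * (2 * x))) / ((x\<^sup>2 - y\<^sup>2)\<^sup>2 * (x\<^sup>2 - y\<^sup>2)\<^sup>2) = D"
    unfolding assms(2) AA_def using assms(1) by (simp add: divide_simps) (simp add: algebra_simps eval_nat_numeral)
  ultimately show ?thesis unfolding PP_def by simp
qed

lemma Pb: assumes "x\<^sup>2 - y\<^sup>2 \<noteq> (0::real)" "D = 2 * BB x y"
  shows "((\<lambda>t. PP x t) has_real_derivative D) (at y)"
proof -
  have "((\<lambda>t. (x\<^sup>2 + t\<^sup>2) / (x\<^sup>2 - t\<^sup>2)\<^sup>2) has_real_derivative ((2 * y) * (x\<^sup>2 - y\<^sup>2)\<^sup>2 - (x\<^sup>2 + y\<^sup>2) * (2 * (x\<^sup>2 - y\<^sup>2) * (0 - 2 * y))) / ((x\<^sup>2 - y\<^sup>2)\<^sup>2 * (x\<^sup>2 - y\<^sup>2)\<^sup>2)) (at y)"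
    by (rule DERIV_divide) (use assms in \<open>auto intro!: derivative_eq_intros\<close>)
  moreover have "((2 * y) * (x\<^sup>2 - y\<^sup>2)\<^sup>2 - (x\<^sup>2 + y\<^sup>2) * (2 * (x\<^sup>2 - y\<^sup>2) * (0 - 2 * y))) / ((x\<^sup>2 - y\<^sup>2)\<^sup>2 * (x\<^sup>2 - y\<^sup>2)\<^sup>2) = D"
    unfolding assms(2) BB_def using assms(1) by (simp add: divide_simps) (simp add: algebra_simps eval_nat_numeral)
  ultimately show ?thesis unfolding PP_def by simp
qed

lemma Ra: assumes "x\<^sup>2 - y\<^sup>2 \<noteq> (0::real)" "D = - BB x y"
  shows "((\<lambda>t. RR t y) has_real_derivative D) (at x)"
proof -
  have "((\<lambda>t. t * y / (t\<^sup>2 - y\<^sup>2)\<^sup>2) has_real_derivative ((1 * y) * (x\<^sup>2 - y\<^sup>2)\<^sup>2 - (x * y) * (2 * (x\<^sup>2 - y\<^sup>2) * (2 * x))) / ((x\<^sup>2 - y\<^sup>2)\<^sup>2 * (x\<^sup>2 - y\<^sup>2)\<^sup>2)) (at x)"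
    by (rule DERIV_divide) (use assms in \<open>auto intro!: derivative_eq_intros\<close>)
  moreover have "((1 * y) * (x\<^sup>2 - y\<^sup>2)\<^sup>2 - (x * y) * (2 * (x\<^sup>2 - y\<^sup>2) * (2 * x))) / ((x\<^sup>2 - y\<^sup>2)\<^sup>2 * (x\<^sup>2 - y\<^sup>2)\<^sup>2) = D"
    unfolding assms(2) BB_def using assms(1) by (simp add: divide_simps) (simp add: algebra_simps eval_nat_numeral)
  ultimately show ?thesis unfolding RR_def by simp
qed

lemma Rb: assumes "x\<^sup>2 - y\<^sup>2 \<noteq> (0::real)" "D = AA x y"
  shows "((\<lambda>t. RR x t) has_real_derivative D) (at y)"
proof -
  have "((\<lambda>t. x * t / (x\<^sup>2 - t\<^sup>2)\<^sup>2) has_real_derivative ((x * 1) * (x\<^sup>2 - y\<^sup>2)\<^sup>2 - (x * y) * (2 * (x\<^sup>2 - y\<^sup>2) * (0 - 2 * y))) / ((x\<^sup>2 - y\<^sup>2)\<^sup>2 * (x\<^sup>2 - y\<^sup>2)\<^sup>2)) (at y)"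
    by (rule DERIV_divide) (use assms in \<open>auto intro!: derivative_eq_intros\<close>)
  moreover have "((x * 1) * (x\<^sup>2 - y\<^sup>2)\<^sup>2 - (x * y) * (2 * (x\<^sup>2 - y\<^sup>2) * (0 - 2 * y))) / ((x\<^sup>2 - y\<^sup>2)\<^sup>2 * (x\<^sup>2 - y\<^sup>2)\<^sup>2) = D"
    unfolding assms(2) AA_def using assms(1) by (simp add: divide_simps) (simp add: algebra_simps eval_nat_numeral)
  ultimately show ?thesis unfolding RR_def by simp
qed

lemma ident1: "x\<^sup>2 - y\<^sup>2 \<noteq> (0::real) \<Longrightarrow> PP x y = x * AA x y - y * BB x y"
  unfolding PP_def AA_def BB_def by (simp add: divide_simps) (simp add: algebra_simps eval_nat_numeral)

lemma ident2: "x\<^sup>2 - y\<^sup>2 \<noteq> (0::real) \<Longrightarrow> qq y x = x * PP x y - 2 * x * y * BB x y + 2 * y * RR x y + 2 * y\<^sup>2 * AA x y"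
  unfolding qq_def PP_def AA_def BB_def RR_def by (simp add: divide_simps) (simp add: algebra_simps eval_nat_numeral)


lemma local_EAB:
  fixes V :: "(real \<times> real) set"
  assumes oV: "open V" and VT: "(\<lambda>(a, b). a\<^sup>2 - b\<^sup>2) ` V \<subseteq> T"
    and nz: "\<forall>(a, b)\<in>V. a\<^sup>2 - b\<^sup>2 \<noteq> 0"
    and sk: "smooth1_on T k1"
    and rep: "\<forall>(a, b)\<in>V. h (a, b) = b * k1 (a\<^sup>2 - b\<^sup>2) + k0 * a / (a\<^sup>2 - b\<^sup>2)"
    and w: "(a0, b0) \<in> V"
  shows "EA h (a0, b0) = 0 \<and> EB h (a0, b0) = 0"
proof -
  define K1 where "K1 = deriv k1"
  define K2 where "K2 = deriv K1"
  have dk: "\<forall>x\<in>T. (k1 has_real_derivative K1 x) (at x)"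
    using sk unfolding smooth1_on_def K1_def by (metis dd funpow_0)
  have dk1: "\<forall>x\<in>T. (K1 has_real_derivative K2 x) (at x)"
  proof
    fix x assume "x \<in> T"
    then have "(deriv ^^ 1) k1 differentiable (at x)" using sk unfolding smooth1_on_def by blast
    then show "(K1 has_real_derivative K2 x) (at x)" unfolding K2_def K1_def by (simp add: dd)
  qed
  define F where "F = (\<lambda>a b. b * k1 (a\<^sup>2 - b\<^sup>2) + k0 * qq b a)"
  define Fu where "Fu = (\<lambda>a b. 2 * a * b * K1 (a\<^sup>2 - b\<^sup>2) - k0 * PP a b)"
  define Fp where "Fp = (\<lambda>a b. k1 (a\<^sup>2 - b\<^sup>2) - 2 * b\<^sup>2 * K1 (a\<^sup>2 - b\<^sup>2) + 2 * k0 * RR a b)"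
  define Fuu where "Fuu = (\<lambda>a b. 2 * b * K1 (a\<^sup>2 - b\<^sup>2) + 4 * a\<^sup>2 * b * K2 (a\<^sup>2 - b\<^sup>2) + 2 * k0 * AA a b)"
  define Fup where "Fup = (\<lambda>a b. 2 * a * K1 (a\<^sup>2 - b\<^sup>2) - 4 * a * b\<^sup>2 * K2 (a\<^sup>2 - b\<^sup>2) - 2 * k0 * BB a b)"
  define Fpp where "Fpp = (\<lambda>a b. - 6 * b * K1 (a\<^sup>2 - b\<^sup>2) + 4 * b^3 * K2 (a\<^sup>2 - b\<^sup>2) + 2 * k0 * AA a b)"
  have sT: "x\<^sup>2 - y\<^sup>2 \<in> T" if "(x, y) \<in> V" for x y using VT that by force
  have s0: "x\<^sup>2 - y\<^sup>2 \<noteq> 0" if "(x, y) \<in> V" for x y using nz that by force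
  have r0: "\<forall>x y. (x, y) \<in> V \<longrightarrow> h (x, y) = F x y" using rep unfolding F_def qq_def by auto
  have D1: "((\<lambda>t. F t y) has_real_derivative Fu x y) (at x)" if "(x, y) \<in> V" for x y
    unfolding F_def Fu_def using sT[OF that] s0[OF that]
    by (auto intro!: derivative_eq_intros chainT[OF dk] qa simp: algebra_simps)
  have D2: "((\<lambda>t. F x t) has_real_derivative Fp x y) (at y)" if "(x, y) \<in> V" for x y
    unfolding F_def Fp_def using sT[OF that] s0[OF that]
    by (auto intro!: derivative_eq_intros chainT[OF dk] qb simp: algebra_simps power2_eq_square)
  have D3: "((\<lambda>t. Fu t y) has_real_derivative Fuu x y) (at x)" if "(x, y) \<in> V" for x y
    unfolding Fu_def Fuu_def using sT[OF that] s0[OF that]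
    by (auto intro!: derivative_eq_intros chainT[OF dk1] Pa simp: algebra_simps power2_eq_square)
  have D4: "((\<lambda>t. Fu x t) has_real_derivative Fup x y) (at y)" if "(x, y) \<in> V" for x y
    unfolding Fu_def Fup_def using sT[OF that] s0[OF that]
    by (auto intro!: derivative_eq_intros chainT[OF dk1] Pb simp: algebra_simps power2_eq_square)
  have D5: "((\<lambda>t. Fp t y) has_real_derivative Fup x y) (at x)" if "(x, y) \<in> V" for x y
    unfolding Fp_def Fup_def using sT[OF that] s0[OF that]
    by (auto intro!: derivative_eq_intros chainT[OF dk] chainT[OF dk1] Ra simp: algebra_simps power2_eq_square)
  have D6: "((\<lambda>t. Fp x t) has_real_derivative Fpp x y) (at y)" if "(x, y) \<in> V" for x y
    unfolding Fp_def Fpp_def using sT[OF that] s0[OF that]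
    by (auto intro!: derivative_eq_intros chainT[OF dk] chainT[OF dk1] Rb simp: algebra_simps power2_eq_square power3_eq_cube)
  have hF1: "\<forall>x y. (x, y) \<in> V \<longrightarrow> pd1 h (x, y) = Fu x y"
    using pd1_DERIV[OF oV _ r0 D1] by blast
  have hF2: "\<forall>x y. (x, y) \<in> V \<longrightarrow> pd2 h (x, y) = Fp x y"
    using pd2_DERIV[OF oV _ r0 D2] by blast
  have e1: "pd1 h (a0, b0) = Fu a0 b0" using hF1 w by blast
  have e2: "pd2 h (a0, b0) = Fp a0 b0" using hF2 w by blast
  have e3: "pd1 (pd1 h) (a0, b0) = Fuu a0 b0" by (rule pd1_DERIV[OF oV w hF1 D3[OF w]])
  have e4: "pd2 (pd1 h) (a0, b0) = Fup a0 b0" by (rule pd2_DERIV[OF oV w hF1 D4[OF w]])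
  have e5: "pd1 (pd2 h) (a0, b0) = Fup a0 b0" by (rule pd1_DERIV[OF oV w hF2 D5[OF w]])
  have e6: "pd2 (pd2 h) (a0, b0) = Fpp a0 b0" by (rule pd2_DERIV[OF oV w hF2 D6[OF w]])
  have e0: "h (a0, b0) = F a0 b0" using r0 w by blast
  have i1: "PP a0 b0 = a0 * AA a0 b0 - b0 * BB a0 b0" by (rule ident1[OF s0[OF w]])
  have i2: "qq b0 a0 = a0 * PP a0 b0 - 2 * a0 * b0 * BB a0 b0 + 2 * b0 * RR a0 b0 + 2 * b0\<^sup>2 * AA a0 b0"
    by (rule ident2[OF s0[OF w]])
  show ?thesis
  proof
    show "EA h (a0, b0) = 0" unfolding EA_def fst_conv snd_conv e1 e4 e6
      by (simp add: Fu_def Fup_def Fpp_def i1 algebra_simps power2_eq_square power3_eq_cube)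
    show "EB h (a0, b0) = 0" unfolding EB_def fst_conv snd_conv e0 e1 e2 e3 e5
      by (simp add: F_def Fu_def Fp_def Fuu_def Fup_def i2 i1 algebra_simps power2_eq_square power3_eq_cube)
  qed
qed


lemma DERIV_ln_abs:
  assumes f: "(f has_real_derivative d) (at x)" and nz: "f x \<noteq> 0"
  shows "((\<lambda>t. ln \<bar>f t\<bar>) has_real_derivative d / f x) (at x)"
proof -
  have c: "f \<midarrow>x\<rightarrow> f x" using DERIV_isCont[OF f] isCont_def by blast
  show ?thesis
  proof (cases "f x > 0")
    case True
    obtain r where r: "r > 0" "\<forall>t. t \<noteq> x \<and> \<bar>x - t\<bar> < r \<longrightarrow> 0 < f t"
      using LIM_fun_gt_zero[OF c True] by blast
    have "((\<lambda>t. ln (f t)) has_real_derivative 1 / f x * d) (at x)"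
      by (rule DERIV_chain2[OF DERIV_ln_divide[OF True] f])
    then have "((\<lambda>t. ln (f t)) has_real_derivative d / f x) (at x)" by simp
    then show ?thesis
    proof (rule has_field_derivative_transform_within[OF _ r(1), where S=UNIV, simplified])
      fix t assume "dist t x < r"
      then have "0 < f t" using r(2) True by (cases "t = x") (auto simp: dist_real_def abs_minus_commute)
      then show "ln (f t) = ln \<bar>f t\<bar>" by simp
    qed
  next
    case False
    then have neg: "f x < 0" using nz by simp
    obtain r where r: "r > 0" "\<forall>t. t \<noteq> x \<and> \<bar>x - t\<bar> < r \<longrightarrow> f t < 0"
      using LIM_fun_less_zero[OF c neg] by blast
    have "((\<lambda>t. ln (- f t)) has_real_derivative 1 / (- f x) * (- d)) (at x)"
      by (rule DERIV_chain2[OF DERIV_ln_divide DERIV_minus[OF f]]) (use neg in simp)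
    then have "((\<lambda>t. ln (- f t)) has_real_derivative d / f x) (at x)" by simp
    then show ?thesis
    proof (rule has_field_derivative_transform_within[OF _ r(1), where S=UNIV, simplified])
      fix t assume "dist t x < r"
      then have "f t < 0" using r(2) neg by (cases "t = x") (auto simp: dist_real_def abs_minus_commute)
      then show "ln (- f t) = ln \<bar>f t\<bar>" by simp
    qed
  qed
qed

lemma part2:
  fixes \<Omega> :: "(real \<times> real) set"
  assumes "\<Omega> \<subseteq> {(a, b). a\<^sup>2 \<noteq> b\<^sup>2}"
  shows "(\<forall>(k1 :: real \<Rightarrow> real) (K1 :: real \<Rightarrow> real) (k0 :: real).
      (\<forall>(a, b)\<in>\<Omega>. (K1 has_real_derivative k1 (a\<^sup>2 - b\<^sup>2)) (at (a\<^sup>2 - b\<^sup>2))) \<longrightarrow>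
      (\<forall>x U. (U 0, U 1) \<in> \<Omega> \<longrightarrow>
         kfun (\<lambda>(a, b). b * k1 (a\<^sup>2 - b\<^sup>2) + k0 * a / (a\<^sup>2 - b\<^sup>2)) (\<lambda>_. 0) (\<lambda>_. 0) x U =
         tdx 1 (\<lambda>y V. K1 ((V 0)\<^sup>2 - (V 1)\<^sup>2) / 2
                     + k0 / 2 * ln \<bar>(V 0 - V 1) / (V 0 + V 1)\<bar> + k0 * y) x U))"
proof (intro allI impI)
  fix k1 K1 :: "real \<Rightarrow> real" and k0 :: real and x :: real and U :: "nat \<Rightarrow> real"
  assume K: "\<forall>(a, b)\<in>\<Omega>. (K1 has_real_derivative k1 (a\<^sup>2 - b\<^sup>2)) (at (a\<^sup>2 - b\<^sup>2))"
    and U: "(U 0, U 1) \<in> \<Omega>"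
  define u where "u = U 0"
  define p where "p = U 1"
  define s where "s = u\<^sup>2 - p\<^sup>2"
  have s0: "s \<noteq> 0" using U assms unfolding s_def u_def p_def by auto
  have sf: "s = (u + p) * (u - p)" unfolding s_def by (simp add: power2_eq_square algebra_simps)
  have up: "u + p \<noteq> 0" "u - p \<noteq> 0" using s0 unfolding sf by auto
  have s2: "u * u - p * p \<noteq> 0" "p * p - u * u \<noteq> 0" using s0 unfolding s_def by (auto simp: power2_eq_square)
  have KD: "(K1 has_real_derivative k1 s) (at s)" using K U unfolding s_def u_def p_def by auto
  define F where "F = (\<lambda>y (V :: nat \<Rightarrow> real). K1 ((V 0)\<^sup>2 - (V 1)\<^sup>2) / 2
                     + k0 / 2 * ln \<bar>(V 0 - V 1) / (V 0 + V 1)\<bar> + k0 * (y::real))"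
  have dx: "deriv (\<lambda>t. F t U) x = k0"
    by (rule DERIV_imp_deriv) (auto simp: F_def intro!: derivative_eq_intros)
  have d0: "pdu 0 F x U = k1 s * u + k0 * p / s"
  proof (rule pdu_eq)
    have e: "(\<lambda>t. F x (U(0:=t))) = (\<lambda>t. K1 (t\<^sup>2 - p\<^sup>2) / 2 + k0 / 2 * ln \<bar>(t - p) / (t + p)\<bar> + k0 * x)"
      by (simp add: F_def p_def)
    have q: "((\<lambda>t. (t - p) / (t + p)) has_real_derivative 2 * p / (u + p)^2) (at u)"
      using up by (auto intro!: derivative_eq_intros simp: field_simps power2_eq_square)
    have l: "((\<lambda>t. ln \<bar>(t - p) / (t + p)\<bar>) has_real_derivative (2 * p / (u + p)^2) / ((u - p) / (u + p))) (at u)"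
      by (rule DERIV_ln_abs[OF q]) (use up in simp)
    have k: "((\<lambda>t. K1 (t\<^sup>2 - p\<^sup>2)) has_real_derivative k1 s * (2 * u)) (at u)"
      by (rule DERIV_chain2[of K1 "k1 s" "\<lambda>t. t\<^sup>2 - p\<^sup>2"]) (use KD in \<open>auto intro!: derivative_eq_intros simp: s_def\<close>)
    have "((\<lambda>t. K1 (t\<^sup>2 - p\<^sup>2) / 2 + k0 / 2 * ln \<bar>(t - p) / (t + p)\<bar> + k0 * x) has_real_derivative
        k1 s * (2 * u) / 2 + k0 / 2 * ((2 * p / (u + p)^2) / ((u - p) / (u + p))) + 0) (at u)"
      by (intro DERIV_add DERIV_cdivide k DERIV_cmult l DERIV_const)
    moreover have "k1 s * (2 * u) / 2 + k0 / 2 * ((2 * p / (u + p)^2) / ((u - p) / (u + p))) + 0 = k1 s * u + k0 * p / s"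
    proof -
      have r: "(2 * p / (u + p)^2) / ((u - p) / (u + p)) = 2 * p / s"
        using up unfolding sf by (simp add: divide_simps power2_eq_square)
      show ?thesis unfolding r using s0 by (simp add: divide_simps)
    qed
    ultimately show "((\<lambda>t. F x (U(0:=t))) has_real_derivative k1 s * u + k0 * p / s) (at (U 0))"
      unfolding e u_def by simp
  qed
  have d1: "pdu 1 F x U = - k1 s * p - k0 * u / s"
  proof (rule pdu_eq)
    have e: "(\<lambda>t. F x (U(1:=t))) = (\<lambda>t. K1 (u\<^sup>2 - t\<^sup>2) / 2 + k0 / 2 * ln \<bar>(u - t) / (u + t)\<bar> + k0 * x)"
      by (simp add: F_def u_def)
    have q: "((\<lambda>t. (u - t) / (u + t)) has_real_derivative - 2 * u / (u + p)^2) (at p)"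
      using up by (auto intro!: derivative_eq_intros simp: field_simps power2_eq_square)
    have l: "((\<lambda>t. ln \<bar>(u - t) / (u + t)\<bar>) has_real_derivative (- 2 * u / (u + p)^2) / ((u - p) / (u + p))) (at p)"
      by (rule DERIV_ln_abs[OF q]) (use up in simp)
    have k: "((\<lambda>t. K1 (u\<^sup>2 - t\<^sup>2)) has_real_derivative k1 s * (- 2 * p)) (at p)"
      by (rule DERIV_chain2[of K1 "k1 s" "\<lambda>t. u\<^sup>2 - t\<^sup>2"]) (use KD in \<open>auto intro!: derivative_eq_intros simp: s_def\<close>)
    have "((\<lambda>t. K1 (u\<^sup>2 - t\<^sup>2) / 2 + k0 / 2 * ln \<bar>(u - t) / (u + t)\<bar> + k0 * x) has_real_derivative
        k1 s * (- 2 * p) / 2 + k0 / 2 * ((- 2 * u / (u + p)^2) / ((u - p) / (u + p))) + 0) (at p)"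
      by (intro DERIV_add DERIV_cdivide k DERIV_cmult l DERIV_const)
    moreover have "k1 s * (- 2 * p) / 2 + k0 / 2 * ((- 2 * u / (u + p)^2) / ((u - p) / (u + p))) + 0 = - k1 s * p - k0 * u / s"
    proof -
      have r: "(- 2 * u / (u + p)^2) / ((u - p) / (u + p)) = - 2 * u / s"
        using up unfolding sf by (simp add: divide_simps power2_eq_square)
      show ?thesis unfolding r using s0 by (simp add: divide_simps)
    qed
    ultimately show "((\<lambda>t. F x (U(1:=t))) has_real_derivative - k1 s * p - k0 * u / s) (at (U 1))"
      unfolding e p_def by simp
  qed
  have "tdx 1 F x U = k0 + p * (k1 s * u + k0 * p / s) + U 2 * (- k1 s * p - k0 * u / s)"
    unfolding tdx_def dx using d0 d1 by (simp add: p_def One_nat_def numeral_2_eq_2)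
  also have "\<dots> = (p * k1 s + k0 * u / s) * (u - U 2)"
    using s0 by (simp add: divide_simps, simp add: s_def algebra_simps power2_eq_square)
  finally show "kfun (\<lambda>(a, b). b * k1 (a\<^sup>2 - b\<^sup>2) + k0 * a / (a\<^sup>2 - b\<^sup>2)) (\<lambda>_. 0) (\<lambda>_. 0) x U =
         tdx 1 (\<lambda>y V. K1 ((V 0)\<^sup>2 - (V 1)\<^sup>2) / 2
                     + k0 / 2 * ln \<bar>(V 0 - V 1) / (V 0 + V 1)\<bar> + k0 * y) x U"
    unfolding F_def[symmetric] kfun_def by (simp add: u_def p_def s_def)
qed


theorem lemma3:
  fixes \<Omega> :: "(real \<times> real) set"
  assumes "open \<Omega>" and "\<Omega> \<subseteq> {(a, b). a\<^sup>2 \<noteq> b\<^sup>2}"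
  shows
   "(\<forall>h1 h2 h3. smooth2_on \<Omega> h1 \<and> smooth2_on \<Omega> h2 \<and> smooth2_on \<Omega> h3 \<longrightarrow>
      ((\<forall>x U. (U 0, U 1) \<in> \<Omega> \<longrightarrow> euler 2 (kfun h1 h2 h3) x U = 0) \<longleftrightarrow>
       ((\<forall>p\<in>\<Omega>. h2 p = 0 \<and> h3 p = 0) \<and>
        (\<forall>p\<in>\<Omega>. \<exists>V. open V \<and> p \<in> V \<and> V \<subseteq> \<Omega> \<and>
           (\<exists>(k1 :: real \<Rightarrow> real) (k0 :: real) T. open T \<and> (\<lambda>(a, b). a\<^sup>2 - b\<^sup>2) ` V \<subseteq> T \<and>
              smooth1_on T k1 \<and>
              (\<forall>(a, b)\<in>V. h1 (a, b) = b * k1 (a\<^sup>2 - b\<^sup>2) + k0 * a / (a\<^sup>2 - b\<^sup>2)))))))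
    \<and>
    (\<forall>(k1 :: real \<Rightarrow> real) (K1 :: real \<Rightarrow> real) (k0 :: real).
      (\<forall>(a, b)\<in>\<Omega>. (K1 has_real_derivative k1 (a\<^sup>2 - b\<^sup>2)) (at (a\<^sup>2 - b\<^sup>2))) \<longrightarrow>
      (\<forall>x U. (U 0, U 1) \<in> \<Omega> \<longrightarrow>
         kfun (\<lambda>(a, b). b * k1 (a\<^sup>2 - b\<^sup>2) + k0 * a / (a\<^sup>2 - b\<^sup>2)) (\<lambda>_. 0) (\<lambda>_. 0) x U =
         tdx 1 (\<lambda>y V. K1 ((V 0)\<^sup>2 - (V 1)\<^sup>2) / 2
                     + k0 / 2 * ln \<bar>(V 0 - V 1) / (V 0 + V 1)\<bar> + k0 * y) x U))"
proof (intro conjI)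
  show "\<forall>(k1 :: real \<Rightarrow> real) (K1 :: real \<Rightarrow> real) (k0 :: real).
      (\<forall>(a, b)\<in>\<Omega>. (K1 has_real_derivative k1 (a\<^sup>2 - b\<^sup>2)) (at (a\<^sup>2 - b\<^sup>2))) \<longrightarrow>
      (\<forall>x U. (U 0, U 1) \<in> \<Omega> \<longrightarrow>
         kfun (\<lambda>(a, b). b * k1 (a\<^sup>2 - b\<^sup>2) + k0 * a / (a\<^sup>2 - b\<^sup>2)) (\<lambda>_. 0) (\<lambda>_. 0) x U =
         tdx 1 (\<lambda>y V. K1 ((V 0)\<^sup>2 - (V 1)\<^sup>2) / 2
                     + k0 / 2 * ln \<bar>(V 0 - V 1) / (V 0 + V 1)\<bar> + k0 * y) x U)"
    by (rule part2[OF assms(2)])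
  show "\<forall>h1 h2 h3. smooth2_on \<Omega> h1 \<and> smooth2_on \<Omega> h2 \<and> smooth2_on \<Omega> h3 \<longrightarrow>
      ((\<forall>x U. (U 0, U 1) \<in> \<Omega> \<longrightarrow> euler 2 (kfun h1 h2 h3) x U = 0) \<longleftrightarrow>
       ((\<forall>p\<in>\<Omega>. h2 p = 0 \<and> h3 p = 0) \<and>
        (\<forall>p\<in>\<Omega>. \<exists>V. open V \<and> p \<in> V \<and> V \<subseteq> \<Omega> \<and>
           (\<exists>(k1 :: real \<Rightarrow> real) (k0 :: real) T. open T \<and> (\<lambda>(a, b). a\<^sup>2 - b\<^sup>2) ` V \<subseteq> T \<and>
              smooth1_on T k1 \<and>
              (\<forall>(a, b)\<in>V. h1 (a, b) = b * k1 (a\<^sup>2 - b\<^sup>2) + k0 * a / (a\<^sup>2 - b\<^sup>2))))))"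
  proof (intro allI impI)
    fix h1 h2 h3 :: "real \<times> real \<Rightarrow> real"
    assume sm: "smooth2_on \<Omega> h1 \<and> smooth2_on \<Omega> h2 \<and> smooth2_on \<Omega> h3"
    then have hs: "smooth2_on \<Omega> h1" by blast
    have S: "open \<Omega>" by (rule assms(1))
    have nz: "a\<^sup>2 - b\<^sup>2 \<noteq> 0" if "(a, b) \<in> \<Omega>" for a b using assms(2) that by auto
    show "(\<forall>x U. (U 0, U 1) \<in> \<Omega> \<longrightarrow> euler 2 (kfun h1 h2 h3) x U = 0) \<longleftrightarrow>
       ((\<forall>p\<in>\<Omega>. h2 p = 0 \<and> h3 p = 0) \<and>
        (\<forall>p\<in>\<Omega>. \<exists>V. open V \<and> p \<in> V \<and> V \<subseteq> \<Omega> \<and>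
           (\<exists>(k1 :: real \<Rightarrow> real) (k0 :: real) T. open T \<and> (\<lambda>(a, b). a\<^sup>2 - b\<^sup>2) ` V \<subseteq> T \<and>
              smooth1_on T k1 \<and>
              (\<forall>(a, b)\<in>V. h1 (a, b) = b * k1 (a\<^sup>2 - b\<^sup>2) + k0 * a / (a\<^sup>2 - b\<^sup>2)))))"
    proof
      assume E: "\<forall>x U. (U 0, U 1) \<in> \<Omega> \<longrightarrow> euler 2 (kfun h1 h2 h3) x U = 0"
      have xF: "xind (kfun h1 h2 h3)" unfolding xind_def kfun_def by simp
      have dF: "dep 3 (kfun h1 h2 h3)" unfolding dep_def kfun_def by simp
      have Q: "2 * h2 (a, b) + 6 * h3 (a, b) * (a - c) = 0" if ab: "(a, b) \<in> \<Omega>" for a b c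
      proof -
        define U where "U = (\<lambda>i::nat. if i = 0 then a else if i = 1 then b else c)"
        have U01: "U 0 = a" "U 1 = b" "U 2 = c" unfolding U_def by auto
        have "euler 2 (kfun h1 h2 h3) 0 (U(4:=1)) = euler 2 (kfun h1 h2 h3) 0 (U(4:=0)) + 1 * pdu 2 (pdu 2 (kfun h1 h2 h3)) 0 U"
          by (rule euler_shift[OF xF dF])
        moreover have "euler 2 (kfun h1 h2 h3) 0 (U(4:=1)) = 0" "euler 2 (kfun h1 h2 h3) 0 (U(4:=0)) = 0"
          using E ab U01 by auto
        ultimately have "pdu 2 (pdu 2 (kfun h1 h2 h3)) 0 U = 0" by simp
        then show ?thesis unfolding kfun_pdu22 U01 .
      qed
      have z: "\<forall>p\<in>\<Omega>. h2 p = 0 \<and> h3 p = 0"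
      proof
        fix p assume p: "p \<in> \<Omega>"
        obtain a b where ab: "p = (a, b)" by (cases p)
        have "2 * h2 (a, b) + 6 * h3 (a, b) * (a - a) = 0" using Q p ab by blast
        moreover have "2 * h2 (a, b) + 6 * h3 (a, b) * (a - (a - 1)) = 0" using Q p ab by blast
        ultimately show "h2 p = 0 \<and> h3 p = 0" unfolding ab by simp
      qed
      have ef: "eqO \<Omega> (euler 2 (kfun h1 h2 h3)) (\<lambda>x U. EB h1 (U 0, U 1) - U 2 * EA h1 (U 0, U 1))"
        by (rule euler_formula[OF S hs z])
      have EAB: "EA h1 (a, b) = 0 \<and> EB h1 (a, b) = 0" if ab: "(a, b) \<in> \<Omega>" for a b
      proof -
        have v: "EB h1 (a, b) - c * EA h1 (a, b) = 0" for c
        proof -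
          define U where "U = (\<lambda>i::nat. if i = 0 then a else if i = 1 then b else c)"
          have U01: "U 0 = a" "U 1 = b" "U 2 = c" unfolding U_def by auto
          have "euler 2 (kfun h1 h2 h3) 0 U = EB h1 (U 0, U 1) - U 2 * EA h1 (U 0, U 1)"
            using ef ab U01 unfolding eqO_def by auto
          moreover have "euler 2 (kfun h1 h2 h3) 0 U = 0" using E ab U01 by auto
          ultimately show ?thesis unfolding U01 by simp
        qed
        show ?thesis using v[of 0] v[of 1] by simp
      qed
      have EAz: "\<forall>w\<in>\<Omega>. EA h1 w = 0" and EBz: "\<forall>w\<in>\<Omega>. EB h1 w = 0" using EAB by auto
      show "(\<forall>p\<in>\<Omega>. h2 p = 0 \<and> h3 p = 0) \<and>
        (\<forall>p\<in>\<Omega>. \<exists>V. open V \<and> p \<in> V \<and> V \<subseteq> \<Omega> \<and>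
           (\<exists>(k1 :: real \<Rightarrow> real) (k0 :: real) T. open T \<and> (\<lambda>(a, b). a\<^sup>2 - b\<^sup>2) ` V \<subseteq> T \<and>
              smooth1_on T k1 \<and>
              (\<forall>(a, b)\<in>V. h1 (a, b) = b * k1 (a\<^sup>2 - b\<^sup>2) + k0 * a / (a\<^sup>2 - b\<^sup>2))))"
      proof (rule conjI[OF z], intro ballI)
        fix p assume p: "p \<in> \<Omega>"
        obtain u0 q0 where pq: "p = (u0, q0)" by (cases p)
        have w: "(u0, q0) \<in> \<Omega>" using p pq by simp
        have "u0\<^sup>2 - q0\<^sup>2 \<noteq> 0" using nz[OF w] .
        then consider "u0\<^sup>2 - q0\<^sup>2 > 0" | "u0\<^sup>2 - q0\<^sup>2 < 0" by linarith
        then show "\<exists>V. open V \<and> p \<in> V \<and> V \<subseteq> \<Omega> \<and>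
           (\<exists>(k1 :: real \<Rightarrow> real) (k0 :: real) T. open T \<and> (\<lambda>(a, b). a\<^sup>2 - b\<^sup>2) ` V \<subseteq> T \<and>
              smooth1_on T k1 \<and>
              (\<forall>(a, b)\<in>V. h1 (a, b) = b * k1 (a\<^sup>2 - b\<^sup>2) + k0 * a / (a\<^sup>2 - b\<^sup>2)))"
        proof cases
          case 1
          show ?thesis unfolding pq by (rule caseA[OF S hs EAz EBz w 1])
        next
          case 2
          show ?thesis unfolding pq by (rule caseB[OF S hs EAz EBz w 2])
        qed
      qed
    next
      assume R: "(\<forall>p\<in>\<Omega>. h2 p = 0 \<and> h3 p = 0) \<and>
        (\<forall>p\<in>\<Omega>. \<exists>V. open V \<and> p \<in> V \<and> V \<subseteq> \<Omega> \<and>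
           (\<exists>(k1 :: real \<Rightarrow> real) (k0 :: real) T. open T \<and> (\<lambda>(a, b). a\<^sup>2 - b\<^sup>2) ` V \<subseteq> T \<and>
              smooth1_on T k1 \<and>
              (\<forall>(a, b)\<in>V. h1 (a, b) = b * k1 (a\<^sup>2 - b\<^sup>2) + k0 * a / (a\<^sup>2 - b\<^sup>2))))"
      then have z: "\<forall>w\<in>\<Omega>. h2 w = 0 \<and> h3 w = 0" by blast
      have EAB: "EA h1 (a, b) = 0 \<and> EB h1 (a, b) = 0" if ab: "(a, b) \<in> \<Omega>" for a b
      proof -
        obtain V k1 k0 T where V: "open V" "(a, b) \<in> V" "V \<subseteq> \<Omega>" "open T"
          "(\<lambda>(a, b). a\<^sup>2 - b\<^sup>2) ` V \<subseteq> T" "smooth1_on T k1"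
          "\<forall>(a, b)\<in>V. h1 (a, b) = b * k1 (a\<^sup>2 - b\<^sup>2) + k0 * a / (a\<^sup>2 - b\<^sup>2)"
          using R ab by blast
        have nzV: "\<forall>(a, b)\<in>V. a\<^sup>2 - b\<^sup>2 \<noteq> 0" using V(3) nz by auto
        show ?thesis by (rule local_EAB[OF V(1) V(5) nzV V(6) V(7) V(2)])
      qed
      have ef: "eqO \<Omega> (euler 2 (kfun h1 h2 h3)) (\<lambda>x U. EB h1 (U 0, U 1) - U 2 * EA h1 (U 0, U 1))"
        by (rule euler_formula[OF S hs z])
      show "\<forall>x U. (U 0, U 1) \<in> \<Omega> \<longrightarrow> euler 2 (kfun h1 h2 h3) x U = 0"
      proof (intro allI impI)
        fix x :: real and U :: "nat \<Rightarrow> real" assume U: "(U 0, U 1) \<in> \<Omega>"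
        have "euler 2 (kfun h1 h2 h3) x U = EB h1 (U 0, U 1) - U 2 * EA h1 (U 0, U 1)"
          using ef U unfolding eqO_def by blast
        then show "euler 2 (kfun h1 h2 h3) x U = 0" using EAB[OF U] by simp
      qed
    qed
  qed
qed


end
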